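(* Let $M$ be a complex manifold, $f:M\to\mathbb{C}$ holomorphic and $Y:=\{f=0\}$. The sheaf $\mathcal{O}_{M|Y}\{\{b\}\}$ is a sheaf of left $\tilde{\mathcal{A}}_{conv.}$-modules, where $B$ acts by $T(b)\cdot\sum_mb^mg_m:=\sum_n b^n\big(\sum_{q+m=n}c_qg_m\big)$ for $T=\sum c_qb^q\in B$, and where $a$ acts by the formula $$a\,(b^mg_m(x)):=b^mf(x)g_m(x)+m\,b^{m+1}g_m(x).$$
   Context: $\tilde{\mathcal{A}}_{conv.}$ is the algebra of formal series $\sum\gamma_{p,q}a^pb^q$ in variables $a,b$ with $ab-ba=b^2$ (product extending that of the polynomial algebra with this relation) such that $|\gamma_{p,q}|\le C_RR^{p+q}q!$ for some $R>1$, $C_R>0$; $B=\mathbb{C}\{\{b\}\}$ is its subalgebra of series $\sum c_qb^q$ with $|c_q|\le CR^qq!$. $\mathcal{O}_{M|Y}\{\{b\}\}$ is the sheaf on $Y$ whose germs at $y_0\in Y$ are series $g=\sum_{m\ge0}b^mg_m(x)$ where the $g_m$ are continuous on some compact neighbourhood $K$ of $y_0$ in $M$, holomorphic in its interior, and $\|g_m\|_K\le C_RR^mm!$ for some $R>1$, $C_R>0$ ($\|\cdot\|_K$ the sup-norm on $K$). *)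

theory Defs
  imports "HOL-Analysis.Analysis"
begin

definition cholo :: "(complex^'n \<Rightarrow> complex) \<Rightarrow> (complex^'n) set \<Rightarrow> bool" where
  "cholo g S \<longleftrightarrow> (\<forall>z\<in>S. \<exists>L. (g has_derivative L) (at z) \<and> (\<forall>c v. L (c *s v) = c * L v))"

text \<open>A holomorphic atlas on the whole space 'a (the manifold M is the space 'a itself).\<close>
definition complex_atlas :: "('a::topological_space set \<times> ('a \<Rightarrow> complex^'n)) set \<Rightarrow> bool" where
  "complex_atlas A \<longleftrightarrow>
     \<Union>(fst ` A) = UNIV \<and>
     (\<forall>(U,\<phi>)\<in>A. open U \<and> open (\<phi> ` U) \<and> homeomorphism U (\<phi> ` U) \<phi> (inv_into U \<phi>)) \<and>
     (\<forall>(U,\<phi>)\<in>A. \<forall>(V,\<psi>)\<in>A. \<forall>k.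
        cholo (\<lambda>z. \<psi> (inv_into U \<phi> z) $ k) (\<phi> ` (U \<inter> V)))"

definition mholo :: "('a::topological_space set \<times> ('a \<Rightarrow> complex^'n)) set \<Rightarrow> ('a \<Rightarrow> complex) \<Rightarrow> 'a set \<Rightarrow> bool" where
  "mholo A g W \<longleftrightarrow> (\<forall>(U,\<phi>)\<in>A. cholo (g \<circ> inv_into U \<phi>) (\<phi> ` (U \<inter> W)))"

section \<open>The algebra tilde-A_conv: series sum gamma_{p,q} a^p b^q with ab - ba = b^2\<close>

text \<open>NO q r i j = coefficient of a^i b^j in the normal ordering of b^q a^r
  (using b^j a = a b^j - j b^(j+1)).\<close>
fun NO :: "nat \<Rightarrow> nat \<Rightarrow> nat \<Rightarrow> nat \<Rightarrow> complex" where
  "NO q 0 i j = (if i = 0 \<and> j = q then 1 else 0)"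
| "NO q (Suc r) i j =
     (if 1 \<le> i then NO q r (i - 1) j else 0)
     - (if 1 \<le> j then of_nat (j - 1) * NO q r i (j - 1) else 0)"

text \<open>Product of formal series (coefficient of a^P b^Q).  Only terms with q + r = i + j
  contribute, so the sum is finite.\<close>
definition amul :: "(nat \<Rightarrow> nat \<Rightarrow> complex) \<Rightarrow> (nat \<Rightarrow> nat \<Rightarrow> complex) \<Rightarrow> nat \<Rightarrow> nat \<Rightarrow> complex" where
  "amul \<gamma> \<delta> P Q =
     (\<Sum>p\<le>P. \<Sum>s\<le>Q. \<Sum>q\<le>(P - p) + (Q - s).
        \<gamma> p q * \<delta> ((P - p) + (Q - s) - q) s * NO q ((P - p) + (Q - s) - q) (P - p) (Q - s))"

definition aone :: "nat \<Rightarrow> nat \<Rightarrow> complex" where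
  "aone p q = (if p = 0 \<and> q = 0 then 1 else 0)"

definition aelt :: "nat \<Rightarrow> nat \<Rightarrow> complex" where
  "aelt p q = (if p = 1 \<and> q = 0 then 1 else 0)"

definition in_Aconv :: "(nat \<Rightarrow> nat \<Rightarrow> complex) \<Rightarrow> bool" where
  "in_Aconv \<gamma> \<longleftrightarrow> (\<exists>R>1. \<exists>C>0. \<forall>p q. norm (\<gamma> p q) \<le> C * R ^ (p + q) * fact q)"

definition in_B :: "(nat \<Rightarrow> complex) \<Rightarrow> bool" where
  "in_B c \<longleftrightarrow> (\<exists>R>1. \<exists>C>0. \<forall>q. norm (c q) \<le> C * R ^ q * fact q)"

definition Bemb :: "(nat \<Rightarrow> complex) \<Rightarrow> nat \<Rightarrow> nat \<Rightarrow> complex" where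
  "Bemb c p q = (if p = 0 then c q else 0)"

section \<open>The sheaf O_{M|Y}{{b}}: series sum b^m g_m(x), g :: nat => M => C\<close>

definition conv_series :: "('a::topological_space set \<times> ('a \<Rightarrow> complex^'n)) set \<Rightarrow> 'a set \<Rightarrow> (nat \<Rightarrow> 'a \<Rightarrow> complex) \<Rightarrow> bool" where
  "conv_series A K g \<longleftrightarrow> compact K \<and>
     (\<forall>m. continuous_on K (g m) \<and> mholo A (g m) (interior K)) \<and>
     (\<exists>R>1. \<exists>C>0. \<forall>m. \<forall>x\<in>K. norm (g m x) \<le> C * R ^ m * fact m)"

definition is_germ :: "('a::topological_space set \<times> ('a \<Rightarrow> complex^'n)) set \<Rightarrow> 'a \<Rightarrow> (nat \<Rightarrow> 'a \<Rightarrow> complex) \<Rightarrow> bool" where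
  "is_germ A y0 g \<longleftrightarrow> (\<exists>K. y0 \<in> interior K \<and> conv_series A K g)"

definition germ_eq :: "'a::topological_space \<Rightarrow> (nat \<Rightarrow> 'a \<Rightarrow> complex) \<Rightarrow> (nat \<Rightarrow> 'a \<Rightarrow> complex) \<Rightarrow> bool" where
  "germ_eq y0 g h \<longleftrightarrow> (\<exists>V. open V \<and> y0 \<in> V \<and> (\<forall>n. \<forall>x\<in>V. g n x = h n x))"

text \<open>Action of a:  a (b^m g_m) = b^m f g_m + m b^(m+1) g_m.\<close>
definition Aop :: "('a \<Rightarrow> complex) \<Rightarrow> (nat \<Rightarrow> 'a \<Rightarrow> complex) \<Rightarrow> nat \<Rightarrow> 'a \<Rightarrow> complex" where
  "Aop f g = (\<lambda>n x. f x * g n x + (if n = 0 then 0 else of_nat (n - 1) * g (n - 1) x))"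

definition bshift :: "(nat \<Rightarrow> 'a \<Rightarrow> complex) \<Rightarrow> nat \<Rightarrow> 'a \<Rightarrow> complex" where
  "bshift g = (\<lambda>n x. if n = 0 then 0 else g (n - 1) x)"

definition Bact :: "(nat \<Rightarrow> complex) \<Rightarrow> (nat \<Rightarrow> 'a \<Rightarrow> complex) \<Rightarrow> nat \<Rightarrow> 'a \<Rightarrow> complex" where
  "Bact c g = (\<lambda>n x. \<Sum>q\<le>n. c q * g (n - q) x)"

text \<open>Action of a general element sum gamma_{p,q} a^p b^q: coefficient n is
  sum over p (infinite) and q <= n (b^q g has no coefficients below q).\<close>
definition act :: "('a \<Rightarrow> complex) \<Rightarrow> (nat \<Rightarrow> nat \<Rightarrow> complex) \<Rightarrow> (nat \<Rightarrow> 'a \<Rightarrow> complex) \<Rightarrow> nat \<Rightarrow> 'a \<Rightarrow> complex" where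
  "act f \<gamma> g = (\<lambda>n x. \<Sum>p. \<Sum>q\<le>n. \<gamma> p q * ((Aop f ^^ p) ((bshift ^^ q) g)) n x)"

end

theory Submission
  imports Defs
begin


definition Aw :: "complex \<Rightarrow> (nat \<Rightarrow> complex) \<Rightarrow> nat \<Rightarrow> complex" where
  "Aw w h = (\<lambda>n. w * h n + (if n = 0 then 0 else of_nat (n - 1) * h (n - 1)))"

definition Bs :: "(nat \<Rightarrow> complex) \<Rightarrow> nat \<Rightarrow> complex" where
  "Bs h = (\<lambda>n. if n = 0 then 0 else h (n - 1))"

definition Xop :: "complex \<Rightarrow> nat \<Rightarrow> nat \<Rightarrow> (nat \<Rightarrow> complex) \<Rightarrow> nat \<Rightarrow> complex" where
  "Xop w p q h = (Aw w ^^ p) ((Bs ^^ q) h)"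

definition actw :: "complex \<Rightarrow> (nat \<Rightarrow> nat \<Rightarrow> complex) \<Rightarrow> (nat \<Rightarrow> complex) \<Rightarrow> nat \<Rightarrow> complex" where
  "actw w \<gamma> u n = (\<Sum>p. \<Sum>q\<le>n. \<gamma> p q * Xop w p q u n)"

fun pf :: "nat \<Rightarrow> nat \<Rightarrow> nat" where
  "pf n 0 = 1"
| "pf n (Suc k) = (n - 1) * pf (n - 1) k"

lemma pf_zero: "n < k \<Longrightarrow> pf n k = 0"
proof (induction k arbitrary: n)
  case 0 then show ?case by simp
next
  case (Suc k) then show ?case by (cases n) auto
qed

lemma pf_fact: "k \<le> n \<Longrightarrow> pf n k * fact (n - k) \<le> (fact n :: nat)"
proof (induction k arbitrary: n)
  case 0 then show ?case by simp
next
  case (Suc k)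
  then obtain m where m: "n = Suc m" by (cases n) auto
  have "pf m k * fact (m - k) \<le> (fact m :: nat)" using Suc by (simp add: m)
  then have "m * (pf m k * fact (m - k)) \<le> m * (fact m :: nat)" by simp
  also have "\<dots> \<le> fact n" by (simp add: m)
  finally show ?case using m by (simp add: mult.assoc)
qed

lemma Bs_pow: "(Bs ^^ q) h n = (if q \<le> n then h (n - q) else 0)"
proof (induction q arbitrary: n)
  case 0 then show ?case by simp
next
  case (Suc q) then show ?case by (auto simp: Bs_def)
qed

lemma Aw_pow: "(Aw w ^^ p) H n = (\<Sum>k\<le>p. of_nat (p choose k) * w^(p-k) * of_nat (pf n k) * H (n - k))"
proof (induction p arbitrary: n)
  case 0 then show ?case by simp
next
  case (Suc p)
  define a where "a k = w^(Suc p - k) * of_nat (pf n k) * H (n - k)" for k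
  have L: "(Aw w ^^ Suc p) H n = w * (Aw w ^^ p) H n + (if n = 0 then 0 else of_nat (n - 1) * (Aw w ^^ p) H (n - 1))"
    by (simp add: Aw_def)
  have e1: "w * (Aw w ^^ p) H n = (\<Sum>k\<le>p. of_nat (p choose k) * a k)"
    unfolding Suc.IH a_def by (simp add: sum_distrib_left Suc_diff_le algebra_simps)
  have e2: "(if n = 0 then 0 else of_nat (n - 1) * (Aw w ^^ p) H (n - 1)) = (\<Sum>k\<le>p. of_nat (p choose k) * a (Suc k))"
  proof (cases n)
    case 0 then show ?thesis by (simp add: a_def)
  next
    case (Suc m)
    show ?thesis unfolding Suc.IH a_def using Suc by (simp add: sum_distrib_left algebra_simps)
  qed
  have "(\<Sum>k\<le>Suc p. of_nat (Suc p choose k) * a k) = a 0 + (\<Sum>k\<le>p. of_nat (Suc p choose Suc k) * a (Suc k))"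
    by (subst sum.atMost_Suc_shift) simp
  also have "\<dots> = a 0 + (\<Sum>k\<le>p. of_nat (p choose Suc k) * a (Suc k)) + (\<Sum>k\<le>p. of_nat (p choose k) * a (Suc k))"
    by (simp add: sum.distrib algebra_simps)
  also have "a 0 + (\<Sum>k\<le>p. of_nat (p choose Suc k) * a (Suc k)) = (\<Sum>k\<le>Suc p. of_nat (p choose k) * a k)"
    by (subst sum.atMost_Suc_shift) simp
  also have "\<dots> = (\<Sum>k\<le>p. of_nat (p choose k) * a k)" by simp
  finally have R: "(\<Sum>k\<le>Suc p. of_nat (Suc p choose k) * a k) = (\<Sum>k\<le>p. of_nat (p choose k) * a k) + (\<Sum>k\<le>p. of_nat (p choose k) * a (Suc k))" .
  show ?case unfolding L e1 e2 R[symmetric] by (simp add: a_def mult.assoc)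
qed

definition Xc :: "complex \<Rightarrow> nat \<Rightarrow> nat \<Rightarrow> nat \<Rightarrow> nat \<Rightarrow> complex" where
  "Xc w p q n k = of_nat (p choose k) * w^(p-k) * of_nat (pf n k) * (if q + k \<le> n then 1 else 0)"

lemma Xop_closed: "Xop w p q h n = (\<Sum>k\<le>p. Xc w p q n k * h (n - k - q))"
  unfolding Xop_def Aw_pow Bs_pow Xc_def
proof (rule sum.cong[OF refl])
  fix k assume "k \<in> {..p}"
  show "of_nat (p choose k) * w ^ (p - k) * of_nat (pf n k) * (if q \<le> n - k then h (n - k - q) else 0) =
         of_nat (p choose k) * w ^ (p - k) * of_nat (pf n k) * (if q + k \<le> n then 1 else 0) * h (n - k - q)"
    by (cases "k \<le> n") (auto simp: pf_zero)
qed

lemma Xop_zero: "n < q \<Longrightarrow> Xop w p q h n = 0"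
  unfolding Xop_closed Xc_def by simp

lemma Xop_local: "(\<And>m. m \<le> n \<Longrightarrow> h m = h' m) \<Longrightarrow> Xop w p q h n = Xop w p q h' n"
  unfolding Xop_closed by (intro sum.cong) auto

lemma Xop_add: "Xop w p q (\<lambda>m. h m + h' m) n = Xop w p q h n + Xop w p q h' n"
  unfolding Xop_closed by (simp add: sum.distrib algebra_simps)

lemma Xop_cmult: "Xop w p q (\<lambda>m. c * h m) n = c * Xop w p q h n"
  unfolding Xop_closed by (simp add: sum_distrib_left algebra_simps)

lemma Xop_sum: "Xop w p q (\<lambda>m. \<Sum>x\<in>S. h x m) n = (\<Sum>x\<in>S. Xop w p q (h x) n)"
  unfolding Xop_closed by (simp add: sum_distrib_left sum.swap[of _ S])

lemma Xop_suminf: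
  assumes "\<And>m. summable (\<lambda>r. H r m)"
  shows "summable (\<lambda>r. Xop w p q (H r) n) \<and> Xop w p q (\<lambda>m. \<Sum>r. H r m) n = (\<Sum>r. Xop w p q (H r) n)"
proof -
  have s: "summable (\<lambda>r. Xc w p q n k * H r (n - k - q))" for k
    by (intro summable_mult assms)
  show ?thesis unfolding Xop_closed
    by (simp add: s summable_sum suminf_sum suminf_mult assms)
qed



lemma bshift_pow: "(bshift ^^ q) g n x = (Bs ^^ q) (\<lambda>m. g m x) n"
proof (induction q arbitrary: n)
  case 0 then show ?case by simp
next
  case (Suc q) then show ?case by (simp add: bshift_def Bs_def)
qed

lemma Aop_pow: "(Aop f ^^ p) G n x = (Aw (f x) ^^ p) (\<lambda>m. G m x) n"
proof (induction p arbitrary: n)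
  case 0 then show ?case by simp
next
  case (Suc p) then show ?case by (simp add: Aop_def Aw_def)
qed

lemma act_eq: "act f \<gamma> g n x = actw (f x) \<gamma> (\<lambda>m. g m x) n"
proof -
  have "((Aop f ^^ p) ((bshift ^^ q) g)) n x = Xop (f x) p q (\<lambda>m. g m x) n" for p q
    unfolding Aop_pow Xop_def by (simp add: bshift_pow)
  then show ?thesis unfolding act_def actw_def by simp
qed

lemma NO_nz: "NO q r i j \<noteq> 0 \<Longrightarrow> i + j = q + r \<and> q \<le> j"
proof (induction r arbitrary: i j)
  case 0 then show ?case by (auto split: if_splits)
next
  case (Suc r)
  show ?case
  proof (cases "(if 1 \<le> i then NO q r (i - 1) j else 0) \<noteq> 0")
    case True
    then show ?thesis using Suc.IH[of "i - 1" j] by (auto split: if_splits)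
  next
    case False
    then have "(if 1 \<le> j then of_nat (j - 1) * NO q r i (j - 1) else 0) \<noteq> 0"
      using Suc.prems by auto
    then show ?thesis using Suc.IH[of i "j - 1"] by (auto split: if_splits)
  qed
qed

lemma NO_bound: "norm (NO q r i j) \<le> 2^r * real j ^ j"
proof (induction r arbitrary: i j)
  case 0
  have "1 \<le> real j ^ j" by (cases "j = 0") (auto intro: one_le_power)
  then show ?case by auto
next
  case (Suc r)
  have a: "norm (if 1 \<le> i then NO q r (i - 1) j else 0) \<le> 2^r * real j ^ j"
    using Suc.IH[of "i - 1" j] by (auto intro: mult_nonneg_nonneg)
  have b: "norm (if 1 \<le> j then of_nat (j - 1) * NO q r i (j - 1) else 0) \<le> 2^r * real j ^ j"
  proof (cases "1 \<le> j")
    case True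
    have "norm (of_nat (j - 1) * NO q r i (j - 1)) = real (j - 1) * norm (NO q r i (j - 1))"
      by (simp add: norm_mult)
    also have "\<dots> \<le> real (j - 1) * (2^r * real (j - 1) ^ (j - 1))"
      using Suc.IH by (intro mult_left_mono) auto
    also have "\<dots> = 2^r * real (j - 1) ^ j"
      using True by (cases j) auto
    also have "\<dots> \<le> 2^r * real j ^ j"
      by (intro mult_left_mono power_mono) auto
    finally show ?thesis using True by simp
  qed auto
  have "norm (NO q (Suc r) i j) \<le> norm (if 1 \<le> i then NO q r (i - 1) j else 0)
      + norm (if 1 \<le> j then of_nat (j - 1) * NO q r i (j - 1) else 0)"
    by (simp only: NO.simps norm_triangle_ineq4)
  also have "\<dots> \<le> 2^r * real j ^ j + 2^r * real j ^ j" using a b by linarith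
  finally show ?case by (simp del: NO.simps add: ac_simps)
qed

lemma Bs_Aw: "(Bs ^^ j) (Aw w h) n = Aw w ((Bs ^^ j) h) n - of_nat j * (Bs ^^ Suc j) h n"
proof -
  have "(Bs ^^ Suc j) h n = (if Suc j \<le> n then h (n - Suc j) else 0)" by (rule Bs_pow)
  then show ?thesis
    unfolding Bs_pow Aw_def
    by (cases "j \<le> n"; cases "Suc j \<le> n") (auto simp: Suc_diff_Suc of_nat_diff algebra_simps)
qed

lemma Aw_pow_diff: "(Aw w ^^ i) (\<lambda>m. F m - c * G m) n = (Aw w ^^ i) F n - c * (Aw w ^^ i) G n"
  unfolding Aw_pow by (simp add: sum_subtractf sum_distrib_left algebra_simps)

lemma Aw_pow_sum: "(Aw w ^^ i) (\<lambda>m. \<Sum>x\<in>S. c x * F x m) n = (\<Sum>x\<in>S. c x * (Aw w ^^ i) (F x) n)"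
  unfolding Aw_pow by (simp add: sum_distrib_left sum.swap[of _ S] algebra_simps)

lemma Aw_pow_Suc: "(Aw w ^^ i) (Aw w F) n = (Aw w ^^ Suc i) F n"
  by (simp add: funpow_Suc_right del: funpow.simps)

lemma BA:
  assumes "q + r \<le> N"
  shows "(Bs ^^ q) ((Aw w ^^ r) h) n = (\<Sum>i\<le>N. \<Sum>j\<le>N. NO q r i j * (Aw w ^^ i) ((Bs ^^ j) h) n)"
  using assms
proof (induction r arbitrary: N h n)
  case 0
  have "(\<Sum>i\<le>N. \<Sum>j\<le>N. NO q 0 i j * (Aw w ^^ i) ((Bs ^^ j) h) n)
      = (\<Sum>i\<le>N. if i = 0 then (Bs ^^ q) h n else 0)"
  proof (intro sum.cong refl)
    fix i assume "i \<in> {..N}"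
    have e: "(if P then 1 else 0) * y = (if P then y else (0::complex))" for P y by simp
    show "(\<Sum>j\<le>N. NO q 0 i j * (Aw w ^^ i) ((Bs ^^ j) h) n) = (if i = 0 then (Bs ^^ q) h n else 0)"
      using 0 by (cases "i = 0") (simp_all add: e sum.delta)
  qed
  also have "\<dots> = (Bs ^^ q) h n" by simp
  finally show ?case by simp
next
  case (Suc r)
  then obtain N0 where N0: "N = Suc N0" "q + r \<le> N0" by (cases N) auto
  define X where "X i j = (Aw w ^^ i) ((Bs ^^ j) h) n" for i j
  have z1: "NO q r i (Suc N0) = 0" for i using NO_nz[of q r i "Suc N0"] N0 by auto
  have z2: "NO q r (Suc N0) j = 0" for j using NO_nz[of q r "Suc N0" j] N0 by auto
  have "(Bs ^^ q) ((Aw w ^^ Suc r) h) n = (Bs ^^ q) ((Aw w ^^ r) (Aw w h)) n"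
    by (simp add: funpow_Suc_right del: funpow.simps)
  also have "\<dots> = (\<Sum>i\<le>N0. \<Sum>j\<le>N0. NO q r i j * (Aw w ^^ i) ((Bs ^^ j) (Aw w h)) n)"
    by (rule Suc.IH[OF N0(2)])
  also have "\<dots> = (\<Sum>i\<le>N0. \<Sum>j\<le>N0. NO q r i j * (X (Suc i) j - of_nat j * X i (Suc j)))"
  proof -
    have "(Aw w ^^ i) ((Bs ^^ j) (Aw w h)) n = X (Suc i) j - of_nat j * X i (Suc j)" for i j
    proof -
      have "(Aw w ^^ i) ((Bs ^^ j) (Aw w h)) n
          = (Aw w ^^ i) (\<lambda>m. Aw w ((Bs ^^ j) h) m - of_nat j * (Bs ^^ Suc j) h m) n"
      proof -
        have "(Bs ^^ j) (Aw w h) = (\<lambda>m. Aw w ((Bs ^^ j) h) m - of_nat j * (Bs ^^ Suc j) h m)"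
          by (rule ext, rule Bs_Aw)
        then show ?thesis by (simp only:)
      qed
      also have "\<dots> = X (Suc i) j - of_nat j * X i (Suc j)"
        unfolding Aw_pow_diff X_def by (simp add: Aw_pow_Suc del: funpow.simps)
      finally show ?thesis .
    qed
    then show ?thesis by simp
  qed
  also have "\<dots> = (\<Sum>i\<le>N0. \<Sum>j\<le>N0. NO q r i j * X (Suc i) j) - (\<Sum>i\<le>N0. \<Sum>j\<le>N0. of_nat j * NO q r i j * X i (Suc j))"
    by (simp add: sum_subtractf algebra_simps)
  also have "(\<Sum>i\<le>N0. \<Sum>j\<le>N0. NO q r i j * X (Suc i) j)
      = (\<Sum>i\<le>Suc N0. \<Sum>j\<le>Suc N0. (if 1 \<le> i then NO q r (i - 1) j else 0) * X i j)"
    by (subst sum.atMost_Suc_shift) (simp add: z1)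
  also have "(\<Sum>i\<le>N0. \<Sum>j\<le>N0. of_nat j * NO q r i j * X i (Suc j))
      = (\<Sum>i\<le>Suc N0. \<Sum>j\<le>Suc N0. (if 1 \<le> j then of_nat (j - 1) * NO q r i (j - 1) else 0) * X i j)"
  proof -
    have inner: "(\<Sum>j\<le>N0. of_nat j * NO q r i j * X i (Suc j)) = (\<Sum>j\<le>Suc N0. (if 1 \<le> j then of_nat (j - 1) * NO q r i (j - 1) else 0) * X i j)" for i
      by (subst sum.atMost_Suc_shift) simp
    have last: "(\<Sum>j\<le>Suc N0. (if 1 \<le> j then of_nat (j - 1) * NO q r (Suc N0) (j - 1) else 0) * X (Suc N0) j) = 0"
      by (simp only: z2 mult_zero_right mult_zero_left if_cancel sum.neutral_const)
    define G where "G i = (\<Sum>j\<le>Suc N0. (if 1 \<le> j then of_nat (j - 1) * NO q r i (j - 1) else 0) * X i j)" for i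
    have "(\<Sum>i\<le>N0. \<Sum>j\<le>N0. of_nat j * NO q r i j * X i (Suc j)) = (\<Sum>i\<le>N0. G i)"
      by (simp only: inner G_def)
    also have "\<dots> = (\<Sum>i\<le>Suc N0. G i)"
    proof -
      have "G (Suc N0) = 0" unfolding G_def by (rule last)
      then show ?thesis by (simp only: sum.atMost_Suc[of G N0]) simp
    qed
    finally show ?thesis by (simp only: G_def)
  qed
  also have "(\<Sum>i\<le>Suc N0. \<Sum>j\<le>Suc N0. (if 1 \<le> i then NO q r (i - 1) j else 0) * X i j)
      - (\<Sum>i\<le>Suc N0. \<Sum>j\<le>Suc N0. (if 1 \<le> j then of_nat (j - 1) * NO q r i (j - 1) else 0) * X i j)
      = (\<Sum>i\<le>N. \<Sum>j\<le>N. NO q (Suc r) i j * X i j)"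
    by (simp add: N0 sum_subtractf algebra_simps)
  finally show ?case by (simp add: X_def)
qed



lemma Aw_pow_sum': "(Aw w ^^ i) (\<lambda>m. \<Sum>x\<in>S. F x m) n = (\<Sum>x\<in>S. (Aw w ^^ i) (F x) n)"
  unfolding Aw_pow by (simp add: sum_distrib_left sum.swap[of _ S] algebra_simps)

lemma Aw_pow_cmult: "(Aw w ^^ i) (\<lambda>m. c * F m) n = c * (Aw w ^^ i) F n"
  unfolding Aw_pow by (simp add: sum_distrib_left algebra_simps)

lemma sum_atMost_restrict:
  fixes a :: "nat \<Rightarrow> complex"
  assumes "\<And>j. j > n \<Longrightarrow> a j = 0" "\<And>j. j > N \<Longrightarrow> a j = 0"
  shows "(\<Sum>j\<le>N. a j) = (\<Sum>j\<le>n. (a j :: complex))"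
proof -
  have "(\<Sum>j\<le>N. a j) = (\<Sum>j\<in>{..N} \<inter> {..n}. a j)"
    by (rule sum.mono_neutral_right) (auto, metis assms(1) not_le)
  also have "\<dots> = (\<Sum>j\<le>n. a j)"
    by (rule sum.mono_neutral_left) (auto, metis assms(2) not_le)
  finally show ?thesis .
qed

lemma R3: "Xop w p q (Xop w r s u) n
   = (\<Sum>j\<le>n. NO q r (q + r - j) j * Xop w (p + (q + r - j)) (j + s) u n)"
proof -
  define N where "N = q + r"
  have bq: "(Bs ^^ q) ((Aw w ^^ r) ((Bs ^^ s) u)) = (\<lambda>m. \<Sum>i\<le>N. \<Sum>j\<le>N. NO q r i j * (Aw w ^^ i) ((Bs ^^ j) ((Bs ^^ s) u)) m)"
    by (rule ext, rule BA) (simp add: N_def)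
  have "Xop w p q (Xop w r s u) n = (\<Sum>i\<le>N. \<Sum>j\<le>N. NO q r i j * Xop w (p + i) (j + s) u n)"
    unfolding Xop_def bq by (simp add: Aw_pow_sum' Aw_pow_cmult funpow_add del: funpow.simps)
  also have "\<dots> = (\<Sum>j\<le>N. \<Sum>i\<le>N. NO q r i j * Xop w (p + i) (j + s) u n)"
    by (rule sum.swap)
  also have "\<dots> = (\<Sum>j\<le>N. NO q r (N - j) j * Xop w (p + (N - j)) (j + s) u n)"
  proof (rule sum.cong[OF refl])
    fix j assume j: "j \<in> {..N}"
    have "NO q r i j * Xop w (p + i) (j + s) u n = (if i = N - j then NO q r (N - j) j * Xop w (p + (N - j)) (j + s) u n else 0)" for i
    proof (cases "NO q r i j = 0")
      case False
      then have "i + j = q + r" using NO_nz by blast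
      then show ?thesis using j by (auto simp: N_def)
    qed (auto simp: N_def)
    then show "(\<Sum>i\<le>N. NO q r i j * Xop w (p + i) (j + s) u n) = NO q r (N - j) j * Xop w (p + (N - j)) (j + s) u n"
      using j by (simp add: sum.delta)
  qed
  also have "\<dots> = (\<Sum>j\<le>n. NO q r (N - j) j * Xop w (p + (N - j)) (j + s) u n)"
  proof (rule sum_atMost_restrict)
    fix j assume "j > n" then show "NO q r (N - j) j * Xop w (p + (N - j)) (j + s) u n = 0"
      by (simp add: Xop_zero)
  next
    fix j assume "j > N" then show "NO q r (N - j) j * Xop w (p + (N - j)) (j + s) u n = 0"
      using NO_nz[of q r "N - j" j] by (auto simp: N_def)
  qed
  finally show ?thesis by (simp add: N_def)
qed



lemma rho_pow_le: 
  assumes "0 < \<rho>" "\<rho> \<le> (1::real)" "k \<le> n" "k \<le> P"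
  shows "\<rho>^(P - k) \<le> \<rho>^P / \<rho>^n"
proof -
  have "\<rho>^(P - k + n) \<le> \<rho>^P" using assms by (intro power_decreasing) auto
  then have "\<rho>^(P - k) * \<rho>^n \<le> \<rho>^P" by (simp add: power_add)
  then show ?thesis using assms by (simp add: pos_le_divide_eq)
qed

lemma Xop_bound:
  assumes w: "norm w \<le> \<rho>" and r: "0 < \<rho>" "\<rho> \<le> 1" and E0: "0 \<le> E"
    and E: "\<And>k. q + k \<le> n \<Longrightarrow> real (pf n k) * norm (h (n - k - q)) \<le> E"
  shows "norm (Xop w P q h n) \<le> (2*\<rho>)^P / \<rho>^n * (real (n+1) * E)"
proof -
  define b where "b k = norm (Xc w P q n k * h (n - k - q))" for k
  have b0: "b k = 0" if "k > n" for k using that by (simp add: b_def Xc_def)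
  have bb: "b k \<le> (2*\<rho>)^P / \<rho>^n * E" for k
  proof (cases "q + k \<le> n \<and> k \<le> P")
    case True
    have "b k = real (P choose k) * norm w ^ (P - k) * (real (pf n k) * norm (h (n - k - q)))"
      using True by (simp add: b_def Xc_def norm_mult norm_power)
    also have "\<dots> \<le> 2^P * \<rho>^(P - k) * E"
      using True w r E[of k] by (intro mult_mono power_mono binomial_le_pow2) (auto simp: binomial_le_pow2)
    also have "\<dots> \<le> 2^P * (\<rho>^P / \<rho>^n) * E"
      using True r E0 by (intro mult_right_mono mult_left_mono rho_pow_le) auto
    also have "\<dots> = (2*\<rho>)^P / \<rho>^n * E" by (simp add: power_mult_distrib)
    finally show ?thesis .
  next
    case False
    then have "b k = 0" by (auto simp: b_def Xc_def)
    then show ?thesis using r E0 by simp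
  qed
  have "norm (Xop w P q h n) \<le> (\<Sum>k\<le>P. b k)"
    unfolding Xop_closed b_def by (rule norm_sum)
  also have "\<dots> = (\<Sum>k\<in>{..P} \<inter> {..n}. b k)"
    by (rule sum.mono_neutral_right) (auto, metis b0 not_le)
  also have "\<dots> \<le> (\<Sum>k\<le>n. b k)"
    by (rule sum_mono2) (auto simp: b_def)
  also have "\<dots> \<le> (\<Sum>k\<le>n. (2*\<rho>)^P / \<rho>^n * E)"
    by (rule sum_mono) (rule bb)
  also have "\<dots> = (2*\<rho>)^P / \<rho>^n * (real (n+1) * E)" by simp
  finally show ?thesis .
qed

definition Eall :: "nat \<Rightarrow> (nat \<Rightarrow> complex) \<Rightarrow> real" where
  "Eall n h = (\<Sum>k\<le>n. real (pf n k)) * (\<Sum>m\<le>n. norm (h m))"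

lemma Eall_nonneg: "0 \<le> Eall n h"
  unfolding Eall_def by (intro mult_nonneg_nonneg sum_nonneg) auto

lemma Eall_bound: "q + k \<le> n \<Longrightarrow> real (pf n k) * norm (h (n - k - q)) \<le> Eall n h"
  unfolding Eall_def
  by (intro mult_mono member_le_sum sum_nonneg) auto

lemma Xop_bound_all:
  assumes "norm w \<le> \<rho>" "0 < \<rho>" "\<rho> \<le> 1"
  shows "norm (Xop w P q h n) \<le> (2*\<rho>)^P / \<rho>^n * (real (n+1) * Eall n h)"
  by (rule Xop_bound[OF assms Eall_nonneg Eall_bound])



lemma term_bound:
  assumes g: "\<And>p q. norm (\<gamma> p q) \<le> C * R^(p+q) * fact q" and C: "0 \<le> C" and R: "0 \<le> R"
    and w: "norm w \<le> \<rho>" and r: "0 < \<rho>" "\<rho> \<le> 1"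
    and E0: "\<And>q. 0 \<le> E q"
    and E: "\<And>q k. q + k \<le> n \<Longrightarrow> real (pf n k) * norm (u (n - k - q)) \<le> E q"
  shows "norm (\<Sum>q\<le>n. \<gamma> p q * Xop w p q u n)
     \<le> (2*\<rho>*R)^p * ((\<Sum>q\<le>n. C * R^q * fact q * (real (n+1) * E q)) / \<rho>^n)"
proof -
  have "norm (\<Sum>q\<le>n. \<gamma> p q * Xop w p q u n) \<le> (\<Sum>q\<le>n. norm (\<gamma> p q) * norm (Xop w p q u n))"
    by (rule order_trans[OF norm_sum]) (simp add: norm_mult)
  also have "\<dots> \<le> (\<Sum>q\<le>n. (C * R^(p+q) * fact q) * ((2*\<rho>)^p / \<rho>^n * (real (n+1) * E q)))"
  proof (rule sum_mono)
    fix q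
    show "norm (\<gamma> p q) * norm (Xop w p q u n) \<le> (C * R^(p+q) * fact q) * ((2*\<rho>)^p / \<rho>^n * (real (n+1) * E q))"
      using C R r E0 by (intro mult_mono g Xop_bound[OF w r E0 E]) auto
  qed
  also have "\<dots> = (2*\<rho>*R)^p * ((\<Sum>q\<le>n. C * R^q * fact q * (real (n+1) * E q)) / \<rho>^n)"
    by (simp add: sum_distrib_left sum_divide_distrib power_add power_mult_distrib algebra_simps)
  finally show ?thesis .
qed

lemma term_summable:
  assumes g: "\<And>p q. norm (\<gamma> p q) \<le> C * R^(p+q) * fact q" and C: "0 \<le> C" and R: "0 \<le> R"
    and w: "norm w \<le> \<rho>" and r: "0 < \<rho>" "\<rho> \<le> 1" and rR: "2*\<rho>*R < 1"
  shows "summable (\<lambda>p. \<Sum>q\<le>n. \<gamma> p q * Xop w p q u n)"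
proof (rule summable_comparison_test'[where N = 0])
  show "summable (\<lambda>p. (2*\<rho>*R)^p * ((\<Sum>q\<le>n. C * R^q * fact q * (real (n+1) * Eall n u)) / \<rho>^n))"
    using rR r R by (intro summable_mult2 summable_geometric) auto
  show "norm (\<Sum>q\<le>n. \<gamma> p q * Xop w p q u n) \<le> (2*\<rho>*R)^p * ((\<Sum>q\<le>n. C * R^q * fact q * (real (n+1) * Eall n u)) / \<rho>^n)" for p
    by (rule term_bound[OF g C R w r Eall_nonneg Eall_bound])
qed

lemma actw_bound:
  assumes g: "\<And>p q. norm (\<gamma> p q) \<le> C * R^(p+q) * fact q" and C: "0 \<le> C" and R: "0 \<le> R"
    and w: "norm w \<le> \<rho>" and r: "0 < \<rho>" "\<rho> \<le> 1" and rR: "2*\<rho>*R \<le> 1/2"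
    and E0: "\<And>q. 0 \<le> E q"
    and E: "\<And>q k. q + k \<le> n \<Longrightarrow> real (pf n k) * norm (u (n - k - q)) \<le> E q"
  shows "norm (actw w \<gamma> u n) \<le> 2 * ((\<Sum>q\<le>n. C * R^q * fact q * (real (n+1) * E q)) / \<rho>^n)"
proof -
  define D where "D = (\<Sum>q\<le>n. C * R^q * fact q * (real (n+1) * E q)) / \<rho>^n"
  have "norm (actw w \<gamma> u n) \<le> (\<Sum>p. (1/2)^p * D)"
    unfolding actw_def
  proof (rule norm_suminf_le)
    show "summable (\<lambda>p. (1/2::real)^p * D)" by (intro summable_mult2 summable_geometric) auto
    fix p
    have "norm (\<Sum>q\<le>n. \<gamma> p q * Xop w p q u n) \<le> (2*\<rho>*R)^p * D"
      unfolding D_def by (rule term_bound[OF g C R w r E0 E])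
    also have "\<dots> \<le> (1/2)^p * D"
    proof (rule mult_right_mono)
      show "(2*\<rho>*R)^p \<le> (1/2)^p" using rR r R by (intro power_mono) auto
      show "0 \<le> D" unfolding D_def using C R r E0 by (intro divide_nonneg_pos sum_nonneg mult_nonneg_nonneg) auto
    qed
    finally show "norm (\<Sum>q\<le>n. \<gamma> p q * Xop w p q u n) \<le> (1/2)^p * D" .
  qed
  also have "\<dots> = 2 * D" by (simp add: suminf_mult2[symmetric] suminf_geometric)
  finally show ?thesis by (simp add: D_def)
qed



lemma geom_prod_summable:
  fixes a b K :: real
  assumes "0 \<le> a" "a < 1" "0 \<le> b" "b < 1" "0 \<le> K" "finite B"
  shows "(\<lambda>((p::nat,r::nat),y::'b). K * a^p * b^r) summable_on ((UNIV \<times> UNIV) \<times> B)"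
proof (rule summable_on_SigmaI[where g = "\<lambda>(p,r). real (card B) * (K * a^p * b^r)"])
  fix x :: "nat \<times> nat" assume "x \<in> UNIV \<times> UNIV"
  obtain p r where x: "x = (p,r)" by (cases x)
  show "((\<lambda>y. (\<lambda>((p,r),y). K * a^p * b^r) (x, y)) has_sum (\<lambda>(p,r). real (card B) * (K * a^p * b^r)) x) B"
    using assms by (simp add: x has_sum_finiteI)
next
  show "(\<lambda>(p,r). real (card B) * (K * a^p * b^r)) summable_on UNIV \<times> UNIV"
  proof (rule summable_on_SigmaI[where g = "\<lambda>p. real (card B) * K * a^p * (1 / (1 - b))"])
    fix p :: nat assume "p \<in> UNIV"
    have "(\<lambda>r. (real (card B) * K * a^p) * b^r) sums ((real (card B) * K * a^p) * (1 / (1 - b)))"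
      using assms by (intro sums_mult geometric_sums) auto
    then show "((\<lambda>r. (\<lambda>(p,r). real (card B) * (K * a^p * b^r)) (p, r)) has_sum real (card B) * K * a^p * (1 / (1 - b))) UNIV"
      using assms by (intro sums_nonneg_imp_has_sum) (auto simp: algebra_simps)
  next
    have "summable (\<lambda>p. (real (card B) * K * (1 / (1 - b))) * a^p)"
      using assms by (intro summable_mult summable_geometric) auto
    then show "(\<lambda>p. real (card B) * K * a^p * (1 / (1 - b))) summable_on UNIV"
      using assms by (subst summable_on_UNIV_nonneg_real_iff) (auto simp: algebra_simps)
  qed (use assms in auto)
qed (use assms in auto)



lemma t_bound:
  assumes gg: "\<And>p q. norm (\<gamma> p q) \<le> Cg * Rg^(p+q) * fact q" and Cg: "0 \<le> Cg" and Rg: "1 \<le> Rg"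
    and gd: "\<And>p q. norm (\<delta> p q) \<le> Cd * Rd^(p+q) * fact q" and Cd: "0 \<le> Cd" and Rd: "1 \<le> Rd"
    and w: "norm w \<le> \<rho>" and r: "0 < \<rho>" "2 * \<rho> \<le> 1"
    and qsj: "q \<le> n" "s \<le> n" "j \<le> n"
  shows "norm (\<gamma> p q * \<delta> r s * (NO q r (q + r - j) j * Xop w (p + (q + r - j)) (j + s) u n))
    \<le> ((Cg * Rg^n * fact n) * (Cd * Rd^n * fact n) * (real (n+1) ^ n) * (real (n+1) * Eall n u / \<rho>^n / (2*\<rho>)^n))
       * (2*\<rho>*Rg)^p * (2*(2*\<rho>*Rd))^r"
proof -
  define A1 where "A1 = Cg * Rg^n * fact n"
  define A2 where "A2 = Cd * Rd^n * fact n"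
  define A3 where "A3 = real (n+1) ^ n"
  define A4 where "A4 = real (n+1) * Eall n u / \<rho>^n / (2*\<rho>)^n"
  have r1: "\<rho> \<le> 1" using r by simp
  have b1: "norm (\<gamma> p q) \<le> A1 * Rg^p"
  proof -
    have "norm (\<gamma> p q) \<le> Cg * Rg^(p+q) * fact q" by (rule gg)
    also have "\<dots> = Cg * Rg^p * (Rg^q * fact q)" by (simp add: power_add algebra_simps)
    also have "\<dots> \<le> Cg * Rg^p * (Rg^n * fact n)"
      using Cg Rg qsj by (intro mult_left_mono mult_mono power_increasing) (auto simp: fact_mono)
    finally show ?thesis by (simp add: A1_def algebra_simps)
  qed
  have b2: "norm (\<delta> r s) \<le> A2 * Rd^r"
  proof -
    have "norm (\<delta> r s) \<le> Cd * Rd^(r+s) * fact s" by (rule gd)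
    also have "\<dots> = Cd * Rd^r * (Rd^s * fact s)" by (simp add: power_add algebra_simps)
    also have "\<dots> \<le> Cd * Rd^r * (Rd^n * fact n)"
      using Cd Rd qsj by (intro mult_left_mono mult_mono power_increasing) (auto simp: fact_mono)
    finally show ?thesis by (simp add: A2_def algebra_simps)
  qed
  have b3: "norm (NO q r (q + r - j) j) \<le> A3 * 2^r"
  proof -
    have "norm (NO q r (q + r - j) j) \<le> 2^r * real j ^ j" by (rule NO_bound)
    also have "real j ^ j \<le> real (n+1) ^ j" using qsj by (intro power_mono) auto
    also have "real (n+1) ^ j \<le> real (n+1) ^ n" using qsj by (intro power_increasing) auto
    finally show ?thesis by (simp add: A3_def algebra_simps)
  qed
  have b4: "norm (Xop w (p + (q + r - j)) (j + s) u n) \<le> A4 * ((2*\<rho>)^p * (2*\<rho>)^r)"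
  proof -
    have "norm (Xop w (p + (q + r - j)) (j + s) u n) \<le> (2*\<rho>)^(p + (q + r - j)) / \<rho>^n * (real (n+1) * Eall n u)"
      by (rule Xop_bound_all[OF w r(1) r1])
    also have "(2*\<rho>)^(p + (q + r - j)) \<le> (2*\<rho>)^p * ((2*\<rho>)^r / (2*\<rho>)^n)"
    proof -
      have "(2*\<rho>)^((q + r - j) + n) \<le> (2*\<rho>)^r" using r qsj by (intro power_decreasing) auto
      then have "(2*\<rho>)^(q + r - j) \<le> (2*\<rho>)^r / (2*\<rho>)^n"
        using r by (simp add: power_add pos_le_divide_eq)
      then show ?thesis using r unfolding power_add by (intro mult_left_mono) auto
    qed
    finally have "norm (Xop w (p + (q + r - j)) (j + s) u n) \<le> (2*\<rho>)^p * ((2*\<rho>)^r / (2*\<rho>)^n) / \<rho>^n * (real (n+1) * Eall n u)"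
      using r Eall_nonneg[of n u] by (simp add: divide_right_mono mult_right_mono)
    then show ?thesis by (simp add: A4_def field_simps)
  qed
  have "norm (\<gamma> p q * \<delta> r s * (NO q r (q + r - j) j * Xop w (p + (q + r - j)) (j + s) u n))
      = norm (\<gamma> p q) * norm (\<delta> r s) * (norm (NO q r (q + r - j) j) * norm (Xop w (p + (q + r - j)) (j + s) u n))"
    by (simp add: norm_mult)
  also have "\<dots> \<le> (A1 * Rg^p) * (A2 * Rd^r) * ((A3 * 2^r) * (A4 * ((2*\<rho>)^p * (2*\<rho>)^r)))"
    using b1 b2 b3 b4 Cg Cd Rg Rd r Eall_nonneg[of n u]
    by (intro mult_mono mult_nonneg_nonneg) (auto simp: A1_def A2_def A3_def A4_def)
  also have "\<dots> = (A1 * A2 * A3 * A4) * (2*\<rho>*Rg)^p * (2*(2*\<rho>*Rd))^r"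
  proof -
    have "(2::real)^r * 2^r = 4^r" by (simp add: power_mult_distrib[symmetric])
    then show ?thesis by (simp add: power_mult_distrib algebra_simps)
  qed
  finally show ?thesis by (simp add: A1_def A2_def A3_def A4_def)
qed



lemma assoc_point:
  assumes gg: "\<And>p q. norm (\<gamma> p q) \<le> Cg * Rg^(p+q) * fact q" and Cg: "0 \<le> Cg" and Rg: "1 \<le> Rg"
    and gd: "\<And>p q. norm (\<delta> p q) \<le> Cd * Rd^(p+q) * fact q" and Cd: "0 \<le> Cd" and Rd: "1 \<le> Rd"
    and w: "norm w \<le> 1 / (8 * Rg * Rd)"
  shows "actw w (amul \<gamma> \<delta>) u n = actw w \<gamma> (\<lambda>m. actw w \<delta> u m) n"
proof -
  define \<rho> where "\<rho> = 1 / (8 * Rg * Rd)"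
  have \<rho>0: "0 < \<rho>" using Rg Rd by (simp add: \<rho>_def)
  have RgRd: "1 \<le> Rg * Rd" using Rg Rd by (metis mult_mono' mult_1 zero_le_one)
  have \<rho>1: "2 * \<rho> \<le> 1" using RgRd by (simp add: \<rho>_def field_simps)
  have \<rho>1': "\<rho> \<le> 1" using \<rho>1 \<rho>0 by simp
  have a1: "2*\<rho>*Rg < 1" using Rd Rg by (simp add: \<rho>_def field_simps)
  have b1: "2*(2*\<rho>*Rd) < 1" using Rd Rg by (simp add: \<rho>_def field_simps)
  have rd: "2*\<rho>*Rd < 1" using b1 \<rho>0 Rd by simp
  have w': "norm w \<le> \<rho>" using w by (simp add: \<rho>_def)
  define X where "X P Q = Xop w P Q u n" for P Q
  define box where "box = {..n} \<times> {..n} \<times> {..n}"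
  define t where "t = (\<lambda>((p::nat,r::nat),(q::nat,s::nat,j::nat)). \<gamma> p q * \<delta> r s * (NO q r (q + r - j) j * X (p + (q + r - j)) (j + s)))"
  define K where "K = ((Cg * Rg^n * fact n) * (Cd * Rd^n * fact n) * (real (n+1) ^ n) * (real (n+1) * Eall n u / \<rho>^n / (2*\<rho>)^n))"
  have K0: "0 \<le> K" unfolding K_def using Cg Cd Rg Rd \<rho>0 Eall_nonneg[of n u] by simp
  define a where "a = 2*\<rho>*Rg"
  define b where "b = 2*(2*\<rho>*Rd)"
  have a0: "0 \<le> a" "a < 1" using a1 \<rho>0 Rg by (auto simp: a_def)
  have b0: "0 \<le> b" "b < 1" using b1 \<rho>0 Rd by (auto simp: b_def)
  have fbox: "finite box" by (simp add: box_def)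
  have tb: "norm (t ((p,r),(q,s,j))) \<le> K * a^p * b^r" if "(q,s,j) \<in> box" for p r q s j
    using that unfolding t_def X_def K_def a_def b_def box_def
    by (simp only: case_prod_conv) (rule t_bound[OF gg Cg Rg gd Cd Rd w' \<rho>0 \<rho>1]; auto)
  have tsum: "t summable_on ((UNIV \<times> UNIV) \<times> box)"
  proof -
    have "(\<lambda>x. norm (t x)) summable_on ((UNIV \<times> UNIV) \<times> box)"
    proof (rule Infinite_Sum.abs_summable_on_comparison_test')
      show "(\<lambda>((p::nat,r::nat),y::nat\<times>nat\<times>nat). K * a^p * b^r) summable_on ((UNIV \<times> UNIV) \<times> box)"
        by (rule geom_prod_summable[OF a0 b0 K0 fbox])
      fix x :: "(nat \<times> nat) \<times> nat \<times> nat \<times> nat" assume "x \<in> (UNIV \<times> UNIV) \<times> box"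
      then show "norm (t x) \<le> (\<lambda>((p::nat,r::nat),y::nat\<times>nat\<times>nat). K * a^p * b^r) x"
        using tb by (cases x) auto
    qed
    then show ?thesis by (simp add: summable_on_iff_abs_summable_on_complex)
  qed
  define S where "S = infsum t ((UNIV \<times> UNIV) \<times> box)"
  have tS: "(t has_sum S) ((UNIV \<times> UNIV) \<times> box)" using tsum by (simp add: S_def)
  define c where "c p r = (\<Sum>y\<in>box. t ((p,r),y))" for p r
  have c_has: "((\<lambda>(p,r). c p r) has_sum S) (UNIV \<times> UNIV)"
  proof -
    have "((\<lambda>x. \<Sum>y\<in>box. t (x,y)) has_sum S) (UNIV \<times> UNIV)"
      by (rule has_sum_Sigma'[OF tS]) (simp add: fbox)
    moreover have "(\<lambda>x. \<Sum>y\<in>box. t (x,y)) = (\<lambda>(p,r). c p r)" by (auto simp: c_def)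
    ultimately show ?thesis by simp
  qed
  have c_norm: "norm (c p r) \<le> real (card box) * K * a^p * b^r" for p r
  proof -
    have "norm (c p r) \<le> (\<Sum>y\<in>box. norm (t ((p,r),y)))" unfolding c_def by (rule norm_sum)
    also have "\<dots> \<le> (\<Sum>y\<in>box. K * a^p * b^r)"
      by (rule sum_mono) (use tb in auto)
    finally show ?thesis by simp
  qed
  have c_row: "((\<lambda>r. c p r) has_sum (\<Sum>r. c p r)) UNIV" for p
  proof -
    have ns: "summable (\<lambda>r. norm (c p r))"
    proof (rule summable_comparison_test'[where N = 0])
      show "summable (\<lambda>r. (real (card box) * K * a^p) * b^r)"
        using b0 by (intro summable_mult summable_geometric) auto
      show "norm (norm (c p r)) \<le> real (card box) * K * a ^ p * b ^ r" for r
        using c_norm by simp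
    qed
    show ?thesis
      by (rule norm_summable_imp_has_sum[OF ns]) (rule summable_sums[OF summable_norm_cancel[OF ns]])
  qed
  have "((\<lambda>p. \<Sum>r. c p r) has_sum S) UNIV"
    by (rule has_sum_Sigma'[OF c_has[unfolded case_prod_unfold]]) (use c_row in simp)
  then have RHS_S: "(\<Sum>p. \<Sum>r. c p r) = S"
    by (intro sums_unique[symmetric] has_sum_imp_sums)
  define H where "H r m = (\<Sum>s\<le>m. \<delta> r s * Xop w r s u m)" for r m
  have Hsum: "summable (\<lambda>r. H r m)" for m
    unfolding H_def by (rule term_summable[OF gd Cd _ w' \<rho>0 \<rho>1' rd]) (use Rd in simp)
  have v_eq: "(\<lambda>m. actw w \<delta> u m) = (\<lambda>m. \<Sum>r. H r m)"
    by (simp add: actw_def H_def)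
  have HX: "Xop w p q (H r) n = (\<Sum>s\<le>n. \<delta> r s * (\<Sum>j\<le>n. NO q r (q + r - j) j * X (p + (q + r - j)) (j + s)))" for p q r
  proof -
    have "Xop w p q (H r) n = Xop w p q (\<lambda>m. \<Sum>s\<le>n. \<delta> r s * Xop w r s u m) n"
    proof (rule Xop_local)
      fix m assume m: "m \<le> n"
      show "H r m = (\<Sum>s\<le>n. \<delta> r s * Xop w r s u m)"
        unfolding H_def by (rule sum_atMost_restrict) (use m in \<open>auto simp: Xop_zero\<close>)
    qed
    also have "\<dots> = (\<Sum>s\<le>n. \<delta> r s * Xop w p q (Xop w r s u) n)"
      by (simp add: Xop_sum Xop_cmult)
    also have "\<dots> = (\<Sum>s\<le>n. \<delta> r s * (\<Sum>j\<le>n. NO q r (q + r - j) j * X (p + (q + r - j)) (j + s)))"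
      by (simp add: R3 X_def)
    finally show ?thesis .
  qed
  have row: "(\<Sum>q\<le>n. \<gamma> p q * Xop w p q (\<lambda>m. actw w \<delta> u m) n) = (\<Sum>r. c p r)" for p
  proof -
    have xs: "summable (\<lambda>r. Xop w p q (H r) n)" and xe: "Xop w p q (\<lambda>m. \<Sum>r. H r m) n = (\<Sum>r. Xop w p q (H r) n)" for q
      using Xop_suminf[of H w p q n, OF Hsum] by auto
    have "(\<Sum>q\<le>n. \<gamma> p q * Xop w p q (\<lambda>m. actw w \<delta> u m) n) = (\<Sum>q\<le>n. \<Sum>r. \<gamma> p q * Xop w p q (H r) n)"
      unfolding v_eq xe by (simp add: suminf_mult[OF xs])
    also have "\<dots> = (\<Sum>r. \<Sum>q\<le>n. \<gamma> p q * Xop w p q (H r) n)"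
      by (rule suminf_sum[symmetric]) (intro summable_mult xs)
    also have "\<dots> = (\<Sum>r. c p r)"
    proof (rule arg_cong[where f = suminf], rule ext)
      fix r
      show "(\<Sum>q\<le>n. \<gamma> p q * Xop w p q (H r) n) = c p r"
        unfolding HX c_def box_def t_def
        by (simp add: sum.cartesian_product[symmetric] sum_distrib_left mult.assoc)
    qed
    finally show ?thesis .
  qed
  have RHS: "actw w \<gamma> (\<lambda>m. actw w \<delta> u m) n = S"
    unfolding actw_def[of w \<gamma>] row RHS_S ..
  define F where "F P = Sigma {..n} (\<lambda>Q. Sigma {..P} (\<lambda>p. Sigma {..Q} (\<lambda>s. {..(P-p)+(Q-s)})))" for P :: nat
  define t' where "t' = (\<lambda>(P::nat,(Q::nat,(p::nat,(s::nat,q::nat)))). \<gamma> p q * \<delta> ((P-p)+(Q-s)-q) s * (NO q ((P-p)+(Q-s)-q) (P-p) (Q-s) * X P Q))"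
  define SR where "SR = {((p::nat,r::nat),(q::nat,s::nat,j::nat)). q \<le> n \<and> s \<le> n \<and> j \<le> n \<and> q \<le> j \<and> j \<le> q + r \<and> j + s \<le> n}"
  define SL where "SL = {(P::nat,(Q::nat,(p::nat,(s::nat,q::nat)))). Q \<le> n \<and> p \<le> P \<and> s \<le> Q \<and> q \<le> Q - s}"
  have fF: "finite (F P)" for P by (simp add: F_def)
  have 1: "(t has_sum S) SR"
  proof -
    have "(t has_sum S) ((UNIV \<times> UNIV) \<times> box) \<longleftrightarrow> (t has_sum S) SR"
    proof (rule has_sum_cong_neutral)
      fix x assume "x \<in> SR - (UNIV \<times> UNIV) \<times> box"
      then show "t x = 0" by (auto simp: SR_def box_def)
    next
      fix x :: "(nat \<times> nat) \<times> nat \<times> nat \<times> nat" assume x: "x \<in> (UNIV \<times> UNIV) \<times> box - SR"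
      obtain p r q s j where xe: "x = ((p,r),(q,s,j))" by (cases x) auto
      show "t x = 0"
      proof (cases "j + s \<le> n")
        case False
        then show ?thesis by (simp add: xe t_def X_def Xop_zero)
      next
        case True
        have "NO q r (q + r - j) j = 0"
        proof (rule ccontr)
          assume "NO q r (q + r - j) j \<noteq> 0"
          from NO_nz[OF this] have "q + r - j + j = q + r" "q \<le> j" by auto
          then show False using x True by (auto simp: xe SR_def box_def)
        qed
        then show ?thesis by (simp add: xe t_def)
      qed
    qed auto
    then show ?thesis using tS by simp
  qed
  have 2: "(t' has_sum S) SL"
  proof -
    have "(t' has_sum S) SL = (t has_sum S) SR"
    proof (rule has_sum_reindex_bij_witness[where j = "\<lambda>(P,(Q,(p,(s,q)))). ((p, (P-p)+(Q-s)-q), (q, s, Q-s))"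
          and i = "\<lambda>((p,r),(q,s,j)). (p + (q+r-j), (j+s, (p, (s, q))))"])
      fix a assume "a \<in> SL" then show "(\<lambda>((p,r),(q,s,j)). (p + (q+r-j), (j+s, (p, (s, q))))) ((\<lambda>(P,(Q,(p,(s,q)))). ((p, (P-p)+(Q-s)-q), (q, s, Q-s))) a) = a"
        by (auto simp: SL_def)
    next
      fix a assume "a \<in> SL" then show "(\<lambda>(P,(Q,(p,(s,q)))). ((p, (P-p)+(Q-s)-q), (q, s, Q-s))) a \<in> SR"
        by (auto simp: SL_def SR_def)
    next
      fix b assume "b \<in> SR" then show "(\<lambda>(P,(Q,(p,(s,q)))). ((p, (P-p)+(Q-s)-q), (q, s, Q-s))) ((\<lambda>((p,r),(q,s,j)). (p + (q+r-j), (j+s, (p, (s, q))))) b) = b"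
        by (auto simp: SR_def)
    next
      fix b assume "b \<in> SR" then show "(\<lambda>((p,r),(q,s,j)). (p + (q+r-j), (j+s, (p, (s, q))))) b \<in> SL"
        by (auto simp: SL_def SR_def)
    next
      fix a assume "a \<in> SL" then show "t ((\<lambda>(P,(Q,(p,(s,q)))). ((p, (P-p)+(Q-s)-q), (q, s, Q-s))) a) = t' a"
        by (auto simp: SL_def t_def t'_def)
    qed simp
    then show ?thesis using 1 by simp
  qed
  have 3: "(t' has_sum S) (Sigma UNIV F)"
  proof -
    have "(t' has_sum S) SL \<longleftrightarrow> (t' has_sum S) (Sigma UNIV F)"
    proof (rule has_sum_cong_neutral)
      fix x assume "x \<in> SL - Sigma UNIV F"
      then show "t' x = 0" by (auto simp: SL_def F_def)
    next
      fix x :: "nat \<times> nat \<times> nat \<times> nat \<times> nat" assume x: "x \<in> Sigma UNIV F - SL"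
      obtain P Q p s q where xe: "x = (P,(Q,(p,(s,q))))" by (cases x) auto
      have "NO q ((P-p)+(Q-s)-q) (P-p) (Q-s) = 0"
      proof (rule ccontr)
        assume "NO q ((P-p)+(Q-s)-q) (P-p) (Q-s) \<noteq> 0"
        from NO_nz[OF this] have "q \<le> Q - s" by auto
        then show False using x by (auto simp: xe SL_def F_def)
      qed
      then show "t' x = 0" by (simp add: xe t'_def)
    qed auto
    then show ?thesis using 2 by simp
  qed
  have "((\<lambda>P. \<Sum>y\<in>F P. t' (P,y)) has_sum S) UNIV"
    by (rule has_sum_Sigma'[OF 3]) (simp add: fF)
  then have LHS_S: "(\<Sum>P. \<Sum>y\<in>F P. t' (P,y)) = S"
    by (intro sums_unique[symmetric] has_sum_imp_sums)
  have rowL: "(\<Sum>Q\<le>n. amul \<gamma> \<delta> P Q * Xop w P Q u n) = (\<Sum>y\<in>F P. t' (P,y))" for P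
    unfolding amul_def F_def t'_def X_def
    by (simp add: sum.Sigma[symmetric] sum_distrib_right mult.assoc) (simp add: ac_simps)
  have LHS: "actw w (amul \<gamma> \<delta>) u n = S"
    unfolding actw_def rowL LHS_S ..
  show ?thesis using LHS RHS by simp
qed



definition Fs :: "(nat \<Rightarrow> nat \<Rightarrow> complex) \<Rightarrow> nat \<Rightarrow> nat \<Rightarrow> complex \<Rightarrow> complex" where
  "Fs \<gamma> q k w = (\<Sum>j. (\<gamma> (j + k) q * of_nat ((j + k) choose k)) * w^j)"

definition Yc :: "nat \<Rightarrow> nat \<Rightarrow> nat \<Rightarrow> (nat \<Rightarrow> complex) \<Rightarrow> complex" where
  "Yc n q k u = of_nat (pf n k) * (if q + k \<le> n then u (n - k - q) else 0)"

lemma expansion: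
  assumes g: "\<And>p q. norm (\<gamma> p q) \<le> C * R^(p+q) * fact q" and C: "0 \<le> C" and R: "1 \<le> R"
    and w: "norm w \<le> 1 / (4 * R)"
  shows "actw w \<gamma> u n = (\<Sum>q\<le>n. \<Sum>k\<le>n. Yc n q k u * Fs \<gamma> q k w)"
proof -
  define \<rho> where "\<rho> = 1 / (4 * R)"
  have \<rho>0: "0 < \<rho>" using R by (simp add: \<rho>_def)
  have \<rho>R: "2 * \<rho> * R < 1" using R by (simp add: \<rho>_def)
  define G where "G q k p = \<gamma> p q * of_nat (p choose k) * w^(p-k)" for q k p
  have Gb: "norm (G q k p) \<le> (C * R^q * fact q / \<rho>^k) * (2*\<rho>*R)^p" for q k p
  proof (cases "k \<le> p")
    case True
    have "norm (G q k p) = norm (\<gamma> p q) * real (p choose k) * norm w ^ (p - k)"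
      by (simp add: G_def norm_mult norm_power)
    also have "\<dots> \<le> (C * R^(p+q) * fact q) * 2^p * \<rho>^(p - k)"
      using w \<rho>0 C R by (intro mult_mono power_mono g) (auto simp: \<rho>_def binomial_le_pow2)
    also have "\<rho>^(p - k) = \<rho>^p / \<rho>^k" using True \<rho>0 by (simp add: power_diff)
    also have "(C * R^(p+q) * fact q) * 2^p * (\<rho>^p / \<rho>^k) = (C * R^q * fact q / \<rho>^k) * (2*\<rho>*R)^p"
      by (simp add: power_add power_mult_distrib field_simps)
    finally show ?thesis .
  next
    case False
    then have "G q k p = 0" by (simp add: G_def)
    then show ?thesis using C R \<rho>0 by simp
  qed
  have Gs: "summable (G q k)" for q k
  proof (rule summable_comparison_test'[where N = 0])
    show "summable (\<lambda>p. (C * R^q * fact q / \<rho>^k) * (2*\<rho>*R)^p)"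
      using \<rho>R \<rho>0 R by (intro summable_mult summable_geometric) auto
    show "norm (G q k p) \<le> (C * R^q * fact q / \<rho>^k) * (2*\<rho>*R)^p" for p by (rule Gb)
  qed
  have Gsh: "suminf (G q k) = Fs \<gamma> q k w" for q k
  proof -
    have "suminf (G q k) = (\<Sum>j. G q k (j + k)) + (\<Sum>i<k. G q k i)"
      by (rule suminf_split_initial_segment[OF Gs])
    also have "(\<Sum>i<k. G q k i) = 0" by (rule sum.neutral) (auto simp: G_def binomial_eq_0)
    also have "(\<lambda>j. G q k (j + k)) = (\<lambda>j. (\<gamma> (j + k) q * of_nat ((j + k) choose k)) * w^j)"
      by (simp add: G_def)
    finally show ?thesis by (simp add: Fs_def)
  qed
  have trm: "(\<Sum>q\<le>n. \<gamma> p q * Xop w p q u n) = (\<Sum>q\<le>n. \<Sum>k\<le>n. Yc n q k u * G q k p)" for p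
  proof (rule sum.cong[OF refl])
    fix q
    have xe: "Xop w p q u n = (\<Sum>k\<le>n. Xc w p q n k * u (n - k - q))"
      unfolding Xop_closed by (rule sum_atMost_restrict) (auto simp: Xc_def)
    show "\<gamma> p q * Xop w p q u n = (\<Sum>k\<le>n. Yc n q k u * G q k p)"
      unfolding xe sum_distrib_left by (intro sum.cong refl) (auto simp: Yc_def G_def Xc_def)
  qed
  have "actw w \<gamma> u n = (\<Sum>p. \<Sum>q\<le>n. \<Sum>k\<le>n. Yc n q k u * G q k p)"
    unfolding actw_def trm ..
  also have "\<dots> = (\<Sum>q\<le>n. \<Sum>p. \<Sum>k\<le>n. Yc n q k u * G q k p)"
    by (rule suminf_sum) (intro summable_sum summable_mult Gs)
  also have "\<dots> = (\<Sum>q\<le>n. \<Sum>k\<le>n. \<Sum>p. Yc n q k u * G q k p)"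
    by (intro sum.cong refl suminf_sum) (intro summable_mult Gs)
  also have "\<dots> = (\<Sum>q\<le>n. \<Sum>k\<le>n. Yc n q k u * Fs \<gamma> q k w)"
    by (simp add: suminf_mult Gs Gsh)
  finally show ?thesis .
qed

lemma Fs_deriv:
  assumes g: "\<And>p q. norm (\<gamma> p q) \<le> C * R^(p+q) * fact q" and C: "0 \<le> C" and R: "1 \<le> R"
    and w: "norm w < 1 / (4 * R)"
  shows "\<exists>D. (Fs \<gamma> q k has_field_derivative D) (at w)"
proof -
  define c where "c j = \<gamma> (j + k) q * of_nat ((j + k) choose k)" for j
  define K :: complex where "K = of_real (1 / (4 * R))"
  have nK: "norm K = 1 / (4 * R)" unfolding K_def norm_of_real using R by simp
  have sm: "summable (\<lambda>j. c j * K^j)"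
  proof (rule summable_comparison_test'[where N = 0])
    show "summable (\<lambda>j. (C * R^(k+q) * fact q * 2^k) * (1/2::real)^j)"
      by (intro summable_mult summable_geometric) auto
    fix j
    have "norm (c j * K^j) = norm (\<gamma> (j + k) q) * real ((j + k) choose k) * (1 / (4 * R))^j"
      by (simp add: c_def nK norm_mult norm_power)
    also have "\<dots> \<le> (C * R^(j + k + q) * fact q) * 2^(j+k) * (1 / (4 * R))^j"
      using C R by (intro mult_mono g) (auto simp: binomial_le_pow2)
    also have "\<dots> = (C * R^(k+q) * fact q * 2^k) * (1/2::real)^j"
    proof -
      have "(2::real)^j * 2^j = 4^j" by (simp add: power_mult_distrib[symmetric])
      then show ?thesis using R by (simp add: power_add power_mult_distrib field_simps)
    qed
    finally show "norm (c j * K^j) \<le> (C * R^(k+q) * fact q * 2^k) * (1/2::real)^j" .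
  qed
  have "norm w < norm K" using w by (simp add: nK)
  from termdiffs_strong[OF sm this] show ?thesis
    unfolding Fs_def c_def[symmetric] by blast
qed



lemma cholo_const: "cholo (\<lambda>z. c) S"
  unfolding cholo_def by (auto intro!: exI[of _ "\<lambda>v. 0"])

lemma cholo_add: "cholo f S \<Longrightarrow> cholo g S \<Longrightarrow> cholo (\<lambda>z. f z + g z) S"
  unfolding cholo_def
proof (intro ballI)
  fix z assume f: "\<forall>z\<in>S. \<exists>L. (f has_derivative L) (at z) \<and> (\<forall>c v. L (c *s v) = c * L v)"
    and g: "\<forall>z\<in>S. \<exists>L. (g has_derivative L) (at z) \<and> (\<forall>c v. L (c *s v) = c * L v)" and z: "z \<in> S"
  obtain L1 where L1: "(f has_derivative L1) (at z)" "\<forall>c v. L1 (c *s v) = c * L1 v" using f z by blast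
  obtain L2 where L2: "(g has_derivative L2) (at z)" "\<forall>c v. L2 (c *s v) = c * L2 v" using g z by blast
  show "\<exists>L. ((\<lambda>z. f z + g z) has_derivative L) (at z) \<and> (\<forall>c v. L (c *s v) = c * L v)"
    using has_derivative_add[OF L1(1) L2(1)] L1(2) L2(2) by (auto simp: algebra_simps)
qed

lemma cholo_mult: "cholo f S \<Longrightarrow> cholo g S \<Longrightarrow> cholo (\<lambda>z. f z * g z) S"
  unfolding cholo_def
proof (intro ballI)
  fix z assume f: "\<forall>z\<in>S. \<exists>L. (f has_derivative L) (at z) \<and> (\<forall>c v. L (c *s v) = c * L v)"
    and g: "\<forall>z\<in>S. \<exists>L. (g has_derivative L) (at z) \<and> (\<forall>c v. L (c *s v) = c * L v)" and z: "z \<in> S"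
  obtain L1 where L1: "(f has_derivative L1) (at z)" "\<forall>c v. L1 (c *s v) = c * L1 v" using f z by blast
  obtain L2 where L2: "(g has_derivative L2) (at z)" "\<forall>c v. L2 (c *s v) = c * L2 v" using g z by blast
  show "\<exists>L. ((\<lambda>z. f z * g z) has_derivative L) (at z) \<and> (\<forall>c v. L (c *s v) = c * L v)"
    using has_derivative_mult[OF L1(1) L2(1)] L1(2) L2(2) by (auto simp: algebra_simps)
qed

lemma cholo_sum: "finite I \<Longrightarrow> (\<And>i. i \<in> I \<Longrightarrow> cholo (f i) S) \<Longrightarrow> cholo (\<lambda>z. \<Sum>i\<in>I. f i z) S"
proof (induction I rule: finite_induct)
  case empty then show ?case by (simp add: cholo_const)
next
  case (insert x F) then show ?case by (simp add: cholo_add)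
qed

lemma cholo_comp:
  assumes h: "cholo h S" and F: "\<And>z. z \<in> S \<Longrightarrow> \<exists>D. (F has_field_derivative D) (at (h z))"
  shows "cholo (\<lambda>z. F (h z)) S"
  unfolding cholo_def
proof
  fix z assume z: "z \<in> S"
  obtain L where L: "(h has_derivative L) (at z)" "\<forall>c v. L (c *s v) = c * L v" using h z unfolding cholo_def by blast
  obtain D where D: "(F has_field_derivative D) (at (h z))" using F z by blast
  have "((F \<circ> h) has_derivative ((*) D \<circ> L)) (at z)"
    by (rule diff_chain_at[OF L(1)]) (use D in \<open>simp add: has_field_derivative_def\<close>)
  then show "\<exists>L. ((\<lambda>z. F (h z)) has_derivative L) (at z) \<and> (\<forall>c v. L (c *s v) = c * L v)"
    using L(2) by (intro exI[of _ "(*) D \<circ> L"]) (auto simp: o_def algebra_simps)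
qed

lemma cholo_transform:
  assumes h: "cholo h S" and T: "\<And>z. z \<in> S \<Longrightarrow> \<exists>T. open T \<and> z \<in> T \<and> (\<forall>z'\<in>T. h z' = h' z')"
  shows "cholo h' S"
  unfolding cholo_def
proof
  fix z assume z: "z \<in> S"
  obtain L where L: "(h has_derivative L) (at z)" "\<forall>c v. L (c *s v) = c * L v" using h z unfolding cholo_def by blast
  obtain T where "open T" "z \<in> T" "\<forall>z'\<in>T. h z' = h' z'" using T z by blast
  then have "(h' has_derivative L) (at z)"
    by (intro has_derivative_transform_within_open[OF L(1)]) auto
  then show "\<exists>L. (h' has_derivative L) (at z) \<and> (\<forall>c v. L (c *s v) = c * L v)" using L(2) by blast
qed

lemma cholo_subset: "S' \<subseteq> S \<Longrightarrow> cholo h S \<Longrightarrow> cholo h S'"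
  unfolding cholo_def by blast

lemma cholo_cont: "cholo h S \<Longrightarrow> open S \<Longrightarrow> continuous_on S h"
  unfolding cholo_def
  by (metis continuous_at_imp_continuous_on has_derivative_continuous)

lemma atlas_chart:
  assumes "complex_atlas A" "(U, \<phi>) \<in> A"
  shows "open U" "open (\<phi> ` U)" "homeomorphism U (\<phi> ` U) \<phi> (inv_into U \<phi>)"
  using assms unfolding complex_atlas_def by auto

lemma f_cont:
  fixes A :: "('a::t2_space set \<times> ('a \<Rightarrow> complex^'n)) set"
  assumes atlas: "complex_atlas A" and fh: "mholo A f W" and W: "open W"
  shows "continuous_on W f"
proof -
  have "isCont f x" if x: "x \<in> W" for x
  proof -
    have "x \<in> \<Union>(fst ` A)" using atlas unfolding complex_atlas_def by auto
    then obtain U \<phi> where U: "(U, \<phi>) \<in> A" "x \<in> U" by force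
    note ch = atlas_chart[OF atlas U(1)]
    define \<psi> where "\<psi> = inv_into U \<phi>"
    have hom: "homeomorphism U (\<phi> ` U) \<phi> \<psi>" using ch(3) by (simp add: \<psi>_def)
    have open1: "open (U \<inter> W)" using ch(1) W by auto
    have "openin (top_of_set (\<phi> ` U)) (\<phi> ` (U \<inter> W))"
      using homeomorphism_imp_open_map[OF hom open_openin_trans[OF ch(1) open1]] by blast
    then have oimg: "open (\<phi> ` (U \<inter> W))" using ch(2) openin_open_trans by blast
    have "cholo (f \<circ> \<psi>) (\<phi> ` (U \<inter> W))" using fh U(1) unfolding mholo_def \<psi>_def by auto
    then have c1: "continuous_on (\<phi> ` (U \<inter> W)) (f \<circ> \<psi>)" by (rule cholo_cont[OF _ oimg])
    have c2: "continuous_on (U \<inter> W) \<phi>" using hom by (meson continuous_on_subset homeomorphism_def inf_le1)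
    have "continuous_on (U \<inter> W) ((f \<circ> \<psi>) \<circ> \<phi>)" by (rule continuous_on_compose[OF c2 c1])
    moreover have "continuous_on (U \<inter> W) ((f \<circ> \<psi>) \<circ> \<phi>) \<longleftrightarrow> continuous_on (U \<inter> W) f"
      by (rule continuous_on_cong[OF refl]) (use hom in \<open>auto simp: homeomorphism_def\<close>)
    ultimately have "continuous_on (U \<inter> W) f" by simp
    then show ?thesis using open1 U(2) x continuous_on_eq_continuous_at by blast
  qed
  then show ?thesis by (simp add: continuous_at_imp_continuous_on)
qed



definition comb where
  "comb f \<gamma> g n x = (\<Sum>q\<le>n. \<Sum>k\<le>n. Yc n q k (\<lambda>m. g m x) * Fs \<gamma> q k (f x))"

lemma act_comb:
  assumes g: "\<And>p q. norm (\<gamma> p q) \<le> C * R^(p+q) * fact q" and C: "0 \<le> C" and R: "1 \<le> R"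
    and w: "norm (f x) \<le> 1 / (4 * R)"
  shows "act f \<gamma> g n x = comb f \<gamma> g n x"
  unfolding act_eq comb_def by (rule expansion[OF g C R w])

lemma mholo_act:
  fixes A :: "('a::t2_space set \<times> ('a \<Rightarrow> complex^'n)) set"
  assumes atlas: "complex_atlas A" and fh: "mholo A f UNIV"
    and gh: "\<And>m. mholo A (g m) W" and W': "W' \<subseteq> W" and fW: "\<And>x. x \<in> W' \<Longrightarrow> norm (f x) < 1 / (4 * R)"
    and g: "\<And>p q. norm (\<gamma> p q) \<le> C * R^(p+q) * fact q" and C: "0 \<le> C" and R: "1 \<le> R"
  shows "mholo A (act f \<gamma> g n) W'"
  unfolding mholo_def
proof (clarify)
  fix U \<phi> assume U: "(U, \<phi>) \<in> A"
  note ch = atlas_chart[OF atlas U]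
  define \<psi> where "\<psi> = inv_into U \<phi>"
  have hom: "homeomorphism U (\<phi> ` U) \<phi> \<psi>" using ch(3) by (simp add: \<psi>_def)
  define S' where "S' = \<phi> ` (U \<inter> W')"
  have S'U: "S' \<subseteq> \<phi> ` U" by (auto simp: S'_def)
  have cf: "cholo (\<lambda>z. f (\<psi> z)) (\<phi> ` U)" using fh U unfolding mholo_def \<psi>_def by (auto simp: o_def)
  have cg: "cholo (\<lambda>z. g m (\<psi> z)) S'" for m
  proof -
    have "cholo (\<lambda>z. g m (\<psi> z)) (\<phi> ` (U \<inter> W))" using gh[of m] U unfolding mholo_def \<psi>_def by (auto simp: o_def)
    then show ?thesis by (rule cholo_subset[rotated]) (use W' in \<open>auto simp: S'_def\<close>)
  qed
  have psi_S: "\<psi> z \<in> W'" if "z \<in> S'" for z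
    using that hom unfolding S'_def homeomorphism_def by auto
  have c1: "cholo (\<lambda>z. Yc n q k (\<lambda>m. g m (\<psi> z))) S'" for q k
    unfolding Yc_def by (cases "q + k \<le> n") (simp_all add: cholo_mult cholo_const cg)
  have c2: "cholo (\<lambda>z. Fs \<gamma> q k (f (\<psi> z))) S'" for q k
  proof (rule cholo_comp[where h = "\<lambda>z. f (\<psi> z)" and F = "Fs \<gamma> q k"])
    show "cholo (\<lambda>z. f (\<psi> z)) S'" by (rule cholo_subset[OF S'U cf])
    fix z assume "z \<in> S'"
    then have "norm (f (\<psi> z)) < 1 / (4 * R)" using fW psi_S by blast
    then show "\<exists>D. (Fs \<gamma> q k has_field_derivative D) (at (f (\<psi> z)))"
      by (rule Fs_deriv[OF g C R])
  qed
  have cc: "cholo (\<lambda>z. comb f \<gamma> g n (\<psi> z)) S'"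
    unfolding comb_def by (intro cholo_sum cholo_mult c1 c2 finite_atMost)
  have "cholo (act f \<gamma> g n \<circ> \<psi>) S'"
  proof (rule cholo_transform[OF cc])
    fix z assume z: "z \<in> S'"
    define T where "T = \<phi> ` U \<inter> (\<lambda>z. f (\<psi> z)) -` ball 0 (1 / (4 * R))"
    have "open T" unfolding T_def
      by (rule continuous_open_preimage[OF cholo_cont[OF cf ch(2)] ch(2)]) simp
    moreover have "z \<in> T" using z S'U fW[OF psi_S[OF z]] by (auto simp: T_def)
    moreover have "\<forall>z'\<in>T. comb f \<gamma> g n (\<psi> z') = (act f \<gamma> g n \<circ> \<psi>) z'"
    proof
      fix z' assume "z' \<in> T"
      then have "norm (f (\<psi> z')) < 1 / (4 * R)" by (auto simp: T_def)
      then show "comb f \<gamma> g n (\<psi> z') = (act f \<gamma> g n \<circ> \<psi>) z'"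
        using act_comb[OF g C R, of f "\<psi> z'" g n] by simp
    qed
    ultimately show "\<exists>T. open T \<and> z \<in> T \<and> (\<forall>z'\<in>T. comb f \<gamma> g n (\<psi> z') = (act f \<gamma> g n \<circ> \<psi>) z')" by blast
  qed
  then show "cholo (act f \<gamma> g n \<circ> inv_into U \<phi>) (\<phi> ` (U \<inter> W'))" by (simp add: \<psi>_def S'_def)
qed

lemma cont_act:
  fixes f :: "'a::t2_space \<Rightarrow> complex"
  assumes fc: "continuous_on UNIV f" and gc: "\<And>m. continuous_on K (g m)"
    and fK: "\<And>x. x \<in> K \<Longrightarrow> norm (f x) < 1 / (4 * R)"
    and g: "\<And>p q. norm (\<gamma> p q) \<le> C * R^(p+q) * fact q" and C: "0 \<le> C" and R: "1 \<le> R"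
  shows "continuous_on K (act f \<gamma> g n)"
proof -
  have cF: "continuous_on K (\<lambda>x. Fs \<gamma> q k (f x))" for q k
  proof (rule continuous_at_imp_continuous_on, rule ballI)
    fix x assume x: "x \<in> K"
    have "isCont f x" using fc by (simp add: continuous_on_eq_continuous_at)
    moreover obtain D where "(Fs \<gamma> q k has_field_derivative D) (at (f x))"
      using Fs_deriv[OF g C R fK[OF x]] by blast
    then have "isCont (Fs \<gamma> q k) (f x)" by (rule DERIV_isCont)
    ultimately show "isCont (\<lambda>x. Fs \<gamma> q k (f x)) x" by (rule isCont_o2)
  qed
  have cY: "continuous_on K (\<lambda>x. Yc n q k (\<lambda>m. g m x))" for q k
    unfolding Yc_def by (cases "q + k \<le> n") (simp_all add: continuous_on_mult continuous_on_const gc)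
  have "continuous_on K (comb f \<gamma> g n)"
    unfolding comb_def by (intro continuous_on_sum continuous_on_mult cY cF)
  moreover have "continuous_on K (comb f \<gamma> g n) \<longleftrightarrow> continuous_on K (act f \<gamma> g n)"
  proof (rule continuous_on_cong[OF refl])
    fix x assume "x \<in> K"
    then show "comb f \<gamma> g n x = act f \<gamma> g n x" using act_comb[OF g C R, of f x g n] fK[of x] by simp
  qed
  ultimately show ?thesis by simp
qed



lemma pf_fact2: "q + k \<le> n \<Longrightarrow> pf n k * fact (n - k - q) * fact q \<le> (fact n :: nat)"
proof -
  assume a: "q + k \<le> n"
  have "fact q * fact (n - k - q) * ((n - k) choose q) = (fact (n - k) :: nat)"
    using a by (intro binomial_fact_lemma) auto
  moreover have "0 < (n - k) choose q" using a by simp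
  moreover have "fact q * fact (n - k - q) * 1 \<le> fact q * fact (n - k - q) * ((n - k) choose q)"
    using \<open>0 < (n - k) choose q\<close> by (intro mult_le_mono2) (simp add: Suc_le_eq)
  ultimately have "fact q * fact (n - k - q) \<le> (fact (n - k) :: nat)" by simp
  then have "pf n k * (fact (n - k - q) * fact q) \<le> pf n k * fact (n - k)"
    by (simp add: mult.commute)
  also have "\<dots> \<le> fact n" using a by (intro pf_fact) auto
  finally show ?thesis by (simp add: mult.assoc)
qed

lemma act_bound_seq:
  assumes g: "\<And>p q. norm (\<gamma> p q) \<le> C * R^(p+q) * fact q" and C: "0 \<le> C" and R: "1 \<le> R"
    and w: "norm w \<le> 1 / (8 * R)"
    and u: "\<And>m. norm (u m) \<le> Cg * Rg^m * fact m" and Cg: "0 \<le> Cg" and Rg: "1 \<le> Rg"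
  shows "norm (actw w \<gamma> u n) \<le> (2*C*Cg) * (32*R*R*Rg)^n * fact n"
proof -
  define \<rho> where "\<rho> = 1 / (8 * R)"
  have \<rho>0: "0 < \<rho>" and \<rho>1: "\<rho> \<le> 1" and \<rho>R: "2*\<rho>*R \<le> 1/2" using R by (auto simp: \<rho>_def)
  define E where "E q = Cg * Rg^n * fact n / fact q" for q
  have E0: "0 \<le> E q" for q using Cg Rg by (simp add: E_def)
  have Eb: "real (pf n k) * norm (u (n - k - q)) \<le> E q" if qk: "q + k \<le> n" for q k
  proof -
    have "real (pf n k) * norm (u (n - k - q)) \<le> real (pf n k) * (Cg * Rg^(n - k - q) * fact (n - k - q))"
      by (intro mult_left_mono u) auto
    also have "\<dots> \<le> real (pf n k) * (Cg * Rg^n * fact (n - k - q))"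
      using Cg Rg by (intro mult_left_mono mult_right_mono power_increasing) auto
    also have "\<dots> = Cg * Rg^n * (real (pf n k * fact (n - k - q) * fact q)) / fact q"
      by (simp add: of_nat_mult)
    also have "\<dots> \<le> Cg * Rg^n * fact n / fact q"
    proof -
      have "real (pf n k * fact (n - k - q) * fact q) \<le> real (fact n :: nat)"
        using pf_fact2[OF qk] by (simp only: of_nat_le_iff)
      then show ?thesis using Cg Rg by (intro divide_right_mono mult_left_mono) auto
    qed
    finally show ?thesis by (simp add: E_def)
  qed
  have w': "norm w \<le> \<rho>" using w by (simp add: \<rho>_def)
  have "norm (actw w \<gamma> u n) \<le> 2 * ((\<Sum>q\<le>n. C * R^q * fact q * (real (n+1) * E q)) / \<rho>^n)"
    by (rule actw_bound[OF g C _ w' \<rho>0 \<rho>1 \<rho>R E0 Eb]) (use R in auto)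
  also have "(\<Sum>q\<le>n. C * R^q * fact q * (real (n+1) * E q)) \<le> (\<Sum>q\<le>n. C * R^n * (real (n+1) * (Cg * Rg^n * fact n)))"
  proof (rule sum_mono)
    fix q assume "q \<in> {..n}"
    then have "C * R^q * fact q * (real (n+1) * E q) = C * R^q * (real (n+1) * (Cg * Rg^n * fact n))"
      by (simp add: E_def)
    also have "\<dots> \<le> C * R^n * (real (n+1) * (Cg * Rg^n * fact n))"
      using C R Cg Rg \<open>q \<in> {..n}\<close> by (intro mult_right_mono mult_left_mono power_increasing) auto
    finally show "C * R^q * fact q * (real (n+1) * E q) \<le> C * R^n * (real (n+1) * (Cg * Rg^n * fact n))" .
  qed
  also have "(\<Sum>q\<le>n. C * R^n * (real (n+1) * (Cg * Rg^n * fact n))) = (C * Cg) * (real (n+1) * real (n+1)) * (R^n * Rg^n) * fact n"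
    by (simp add: algebra_simps)
  also have "\<dots> \<le> (C * Cg) * 4^n * (R^n * Rg^n) * fact n"
  proof -
    have "n + 1 \<le> (2::nat)^n" using less_exp[of n] by (simp add: Suc_le_eq)
    then have "real (n+1) \<le> 2^n" by (metis of_nat_le_iff of_nat_numeral of_nat_power)
    then have "real (n+1) * real (n+1) \<le> 2^n * 2^n" by (intro mult_mono) auto
    also have "(2::real)^n * 2^n = 4^n" by (simp add: power_mult_distrib[symmetric])
    finally show ?thesis using C Cg R Rg by (intro mult_right_mono mult_left_mono) auto
  qed
  finally have "norm (actw w \<gamma> u n) \<le> 2 * ((C * Cg) * 4^n * (R^n * Rg^n) * fact n / \<rho>^n)"
    using \<rho>0 by (simp add: divide_right_mono)
  also have "\<dots> = (2*C*Cg) * (32*R*R*Rg)^n * fact n"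
  proof -
    have e1: "x / \<rho>^n = x * (8*R)^n" for x by (simp add: \<rho>_def power_one_over)
    have e3: "(32::real)^n = 4^n * 8^n" by (simp add: power_mult_distrib[symmetric])
    have e2: "(32*R*R*Rg)^n = 4^n * (R^n * Rg^n) * (8*R)^n"
      by (simp only: power_mult_distrib e3) (simp add: algebra_simps)
    show ?thesis unfolding e1 e2 by (simp add: algebra_simps)
  qed
  finally show ?thesis .
qed



lemma link: "((Aop f ^^ p) ((bshift ^^ q) g)) n x = Xop (f x) p q (\<lambda>m. g m x) n"
  unfolding Aop_pow Xop_def by (simp add: bshift_pow)

lemma actw_summ:
  assumes g: "\<And>p q. norm (\<gamma> p q) \<le> C * R^(p+q) * fact q" and C: "0 \<le> C" and R: "1 \<le> R"
    and w: "norm w \<le> 1 / (4 * R)"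
  shows "summable (\<lambda>p. \<Sum>q\<le>n. \<gamma> p q * Xop w p q u n)"
  by (rule term_summable[OF g C _ w]) (use R in auto)

lemma Aconv_bound:
  assumes "in_Aconv \<gamma>"
  obtains C R where "0 \<le> C" "1 \<le> R" "\<And>p q. norm (\<gamma> p q) \<le> C * R^(p+q) * fact q"
  using assms unfolding in_Aconv_def by (meson less_eq_real_def)

lemma suminf_single0: "(\<Sum>p. if p = 0 then a else 0) = (a :: complex)"
  using sums_unique[OF sums_single[of 0 "\<lambda>_. a"]] by simp

lemma open_small:
  assumes fc: "continuous_on UNIV (f :: 'a::topological_space \<Rightarrow> complex)" and y0: "f y0 = 0" and e: "0 < e"
  shows "open {x. norm (f x) < e} \<and> y0 \<in> {x. norm (f x) < e}"
proof
  show "open {x. norm (f x) < e}"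
    by (rule open_Collect_less) (auto intro: continuous_intros fc)
  show "y0 \<in> {x. norm (f x) < e}" using y0 e by simp
qed



theorem proposition2p2p3:
  fixes A :: "('a::{t2_space, second_countable_topology} set \<times> ('a \<Rightarrow> complex^'n)) set"
    and f :: "'a \<Rightarrow> complex" and y0 :: 'a
  assumes atlas: "complex_atlas A"
    and f_holo: "mholo A f UNIV"
    and y0_Y: "f y0 = 0"
  shows
    \<comment> \<open>the action of tilde-A_conv is well defined on germs at y0\<close>
    "(\<forall>\<gamma> g. in_Aconv \<gamma> \<and> is_germ A y0 g \<longrightarrow>
        (\<exists>K. y0 \<in> interior K \<and> conv_series A K (act f \<gamma> g) \<and>
             (\<forall>n. \<forall>x\<in>K. summable (\<lambda>p. \<Sum>q\<le>n. \<gamma> p q * ((Aop f ^^ p) ((bshift ^^ q) g)) n x))))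
     \<and> (\<forall>\<gamma> g h. in_Aconv \<gamma> \<and> is_germ A y0 g \<and> germ_eq y0 g h \<longrightarrow>
          germ_eq y0 (act f \<gamma> g) (act f \<gamma> h))
     \<and> (\<forall>\<gamma> \<delta> g. in_Aconv \<gamma> \<and> in_Aconv \<delta> \<and> is_germ A y0 g \<longrightarrow>
          germ_eq y0 (act f (amul \<gamma> \<delta>) g) (act f \<gamma> (act f \<delta> g)))
     \<and> (\<forall>g. is_germ A y0 g \<longrightarrow> germ_eq y0 (act f aone g) g)
     \<and> (\<forall>\<gamma> \<delta> g. in_Aconv \<gamma> \<and> in_Aconv \<delta> \<and> is_germ A y0 g \<longrightarrow>
          germ_eq y0 (act f (\<lambda>p q. \<gamma> p q + \<delta> p q) g) (\<lambda>n x. act f \<gamma> g n x + act f \<delta> g n x))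
     \<and> (\<forall>\<gamma> g h. in_Aconv \<gamma> \<and> is_germ A y0 g \<and> is_germ A y0 h \<longrightarrow>
          germ_eq y0 (act f \<gamma> (\<lambda>n x. g n x + h n x)) (\<lambda>n x. act f \<gamma> g n x + act f \<gamma> h n x))
     \<and> (\<forall>c \<gamma> g. in_Aconv \<gamma> \<and> is_germ A y0 g \<longrightarrow>
          germ_eq y0 (act f (\<lambda>p q. c * \<gamma> p q) g) (\<lambda>n x. c * act f \<gamma> g n x)
        \<and> germ_eq y0 (act f \<gamma> (\<lambda>n x. c * g n x)) (\<lambda>n x. c * act f \<gamma> g n x))
     \<and> (\<forall>c g. in_B c \<and> is_germ A y0 g \<longrightarrow> germ_eq y0 (act f (Bemb c) g) (Bact c g))
     \<and> (\<forall>g. is_germ A y0 g \<longrightarrow> germ_eq y0 (act f aelt g) (Aop f g))"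
proof -
  have fc: "continuous_on UNIV f" by (rule f_cont[OF atlas f_holo open_UNIV])
  have germI: "germ_eq y0 G H" if "\<And>n x. norm (f x) < e \<Longrightarrow> G n x = H n x" "0 < e" for G H e
    unfolding germ_eq_def using open_small[OF fc y0_Y \<open>0 < e\<close>] that(1) by blast
  have P1: "\<forall>\<gamma> g. in_Aconv \<gamma> \<and> is_germ A y0 g \<longrightarrow>
        (\<exists>K. y0 \<in> interior K \<and> conv_series A K (act f \<gamma> g) \<and>
             (\<forall>n. \<forall>x\<in>K. summable (\<lambda>p. \<Sum>q\<le>n. \<gamma> p q * ((Aop f ^^ p) ((bshift ^^ q) g)) n x)))"
  proof (intro allI impI)
    fix \<gamma> g assume a: "in_Aconv \<gamma> \<and> is_germ A y0 g"
    obtain C R where g: "0 \<le> C" "1 \<le> R" "\<And>p q. norm (\<gamma> p q) \<le> C * R^(p+q) * fact q"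
      using a Aconv_bound by blast
    obtain K0 where K0: "y0 \<in> interior K0" "conv_series A K0 g" using a unfolding is_germ_def by blast
    have K0c: "compact K0" and gc: "\<And>m. continuous_on K0 (g m)" and gh: "\<And>m. mholo A (g m) (interior K0)"
      using K0(2) unfolding conv_series_def by auto
    obtain Rg Cg where Rg: "1 < Rg" and Cg: "0 < Cg" and gb: "\<And>m x. x \<in> K0 \<Longrightarrow> norm (g m x) \<le> Cg * Rg^m * fact m"
      using K0(2) unfolding conv_series_def by blast
    define e where "e = 1 / (8 * R)"
    have e0: "0 < e" using g by (simp add: e_def)
    have e4: "e < 1 / (4 * R)" using g by (simp add: e_def field_simps)
    define K where "K = K0 \<inter> {x. norm (f x) \<le> e}"
    have KK0: "K \<subseteq> K0" by (auto simp: K_def)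
    have fK: "norm (f x) < 1 / (4 * R)" if "x \<in> K" for x using that e4 by (auto simp: K_def)
    have Kc: "compact K" unfolding K_def
      by (rule compact_Int_closed[OF K0c], rule closed_Collect_le) (auto intro: continuous_intros fc)
    have y0K: "y0 \<in> interior K"
    proof -
      have "interior K0 \<inter> {x. norm (f x) < e} \<subseteq> K" using interior_subset[of K0] by (auto simp: K_def)
      moreover have "open (interior K0 \<inter> {x. norm (f x) < e})" using open_small[OF fc y0_Y e0] by auto
      ultimately have "interior K0 \<inter> {x. norm (f x) < e} \<subseteq> interior K" by (rule interior_maximal)
      then show ?thesis using K0(1) y0_Y e0 by auto
    qed
    have cs: "conv_series A K (act f \<gamma> g)"
      unfolding conv_series_def
    proof (intro conjI allI)
      show "compact K" by (rule Kc)
      fix m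
      show "continuous_on K (act f \<gamma> g m)"
        by (rule cont_act[OF fc _ fK g(3) g(1) g(2)]) (use gc continuous_on_subset KK0 in blast)
      show "mholo A (act f \<gamma> g m) (interior K)"
        by (rule mholo_act[OF atlas f_holo gh _ _ g(3) g(1) g(2)])
           (use interior_mono[OF KK0] fK interior_subset in auto)
    next
      show "\<exists>R>1. \<exists>C>0. \<forall>m. \<forall>x\<in>K. norm (act f \<gamma> g m x) \<le> C * R ^ m * fact m"
      proof (intro exI conjI allI ballI)
        show "1 < 32 * R * R * Rg" using g Rg by (metis less_1_mult one_le_numeral order_le_less_trans
            less_le_trans mult.assoc mult_le_cancel_left1 mult_less_cancel_left1 zero_less_one one_less_numeral_iff semiring_norm(76))
        show "0 < 2 * (C + 1) * Cg" using g Cg by simp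
        fix m x assume x: "x \<in> K"
        have "norm (act f \<gamma> g m x) = norm (actw (f x) \<gamma> (\<lambda>m. g m x) m)" by (simp add: act_eq)
        also have "\<dots> \<le> (2*C*Cg) * (32*R*R*Rg)^m * fact m"
          by (rule act_bound_seq[OF g(3) g(1) g(2) _ _ _]) (use x gb KK0 Cg Rg in \<open>auto simp: K_def e_def\<close>)
        also have "\<dots> \<le> (2*(C+1)*Cg) * (32*R*R*Rg)^m * fact m"
          using g Cg Rg by (intro mult_right_mono) auto
        finally show "norm (act f \<gamma> g m x) \<le> 2 * (C + 1) * Cg * (32 * R * R * Rg) ^ m * fact m" .
      qed
    qed
    have sm: "\<forall>n. \<forall>x\<in>K. summable (\<lambda>p. \<Sum>q\<le>n. \<gamma> p q * ((Aop f ^^ p) ((bshift ^^ q) g)) n x)"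
    proof (intro allI ballI)
      fix n x assume x: "x \<in> K"
      have "summable (\<lambda>p. \<Sum>q\<le>n. \<gamma> p q * Xop (f x) p q (\<lambda>m. g m x) n)"
        by (rule actw_summ[OF g(3) g(1) g(2)]) (use fK[OF x] in simp)
      then show "summable (\<lambda>p. \<Sum>q\<le>n. \<gamma> p q * ((Aop f ^^ p) ((bshift ^^ q) g)) n x)"
        by (simp add: link)
    qed
    show "\<exists>K. y0 \<in> interior K \<and> conv_series A K (act f \<gamma> g) \<and>
             (\<forall>n. \<forall>x\<in>K. summable (\<lambda>p. \<Sum>q\<le>n. \<gamma> p q * ((Aop f ^^ p) ((bshift ^^ q) g)) n x))"
      using y0K cs sm by blast
  qed
  have P2: "\<forall>\<gamma> g h. in_Aconv \<gamma> \<and> is_germ A y0 g \<and> germ_eq y0 g h \<longrightarrow> germ_eq y0 (act f \<gamma> g) (act f \<gamma> h)"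
  proof (intro allI impI)
    fix \<gamma> g h assume "in_Aconv \<gamma> \<and> is_germ A y0 g \<and> germ_eq y0 g h"
    then obtain V where V: "open V" "y0 \<in> V" "\<forall>n. \<forall>x\<in>V. g n x = h n x" unfolding germ_eq_def by blast
    have "act f \<gamma> g n x = act f \<gamma> h n x" if "x \<in> V" for n x
    proof -
      have "(\<lambda>m. g m x) = (\<lambda>m. h m x)" using V that by auto
      then show ?thesis by (simp add: act_eq)
    qed
    then show "germ_eq y0 (act f \<gamma> g) (act f \<gamma> h)" unfolding germ_eq_def using V by blast
  qed
  have P3: "\<forall>\<gamma> \<delta> g. in_Aconv \<gamma> \<and> in_Aconv \<delta> \<and> is_germ A y0 g \<longrightarrow>
          germ_eq y0 (act f (amul \<gamma> \<delta>) g) (act f \<gamma> (act f \<delta> g))"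
  proof (intro allI impI)
    fix \<gamma> \<delta> g assume a: "in_Aconv \<gamma> \<and> in_Aconv \<delta> \<and> is_germ A y0 g"
    obtain Cg Rg where g: "0 \<le> Cg" "1 \<le> Rg" "\<And>p q. norm (\<gamma> p q) \<le> Cg * Rg^(p+q) * fact q"
      using a Aconv_bound by blast
    obtain Cd Rd where d: "0 \<le> Cd" "1 \<le> Rd" "\<And>p q. norm (\<delta> p q) \<le> Cd * Rd^(p+q) * fact q"
      using a Aconv_bound by blast
    show "germ_eq y0 (act f (amul \<gamma> \<delta>) g) (act f \<gamma> (act f \<delta> g))"
    proof (rule germI)
      show "0 < 1 / (8 * Rg * Rd)" using g d by simp
      fix n x assume x: "norm (f x) < 1 / (8 * Rg * Rd)"
      have "act f (amul \<gamma> \<delta>) g n x = actw (f x) (amul \<gamma> \<delta>) (\<lambda>m. g m x) n" by (rule act_eq)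
      also have "\<dots> = actw (f x) \<gamma> (\<lambda>m. actw (f x) \<delta> (\<lambda>m'. g m' x) m) n"
        by (rule assoc_point[OF g(3) g(1) g(2) d(3) d(1) d(2)]) (use x in simp)
      also have "\<dots> = act f \<gamma> (act f \<delta> g) n x" by (simp add: act_eq)
      finally show "act f (amul \<gamma> \<delta>) g n x = act f \<gamma> (act f \<delta> g) n x" .
    qed
  qed
  have P4: "\<forall>g. is_germ A y0 g \<longrightarrow> germ_eq y0 (act f aone g) g"
  proof (intro allI impI)
    fix g :: "nat \<Rightarrow> 'a \<Rightarrow> complex"
    show "germ_eq y0 (act f aone g) g"
    proof (rule germI[where e = 1])
      fix n x
      have "(\<lambda>p. \<Sum>q\<le>n. aone p q * Xop (f x) p q (\<lambda>m. g m x) n) = (\<lambda>p. if p = 0 then g n x else 0)"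
      proof
        fix p
        have e: "(if P then 1 else 0) * y = (if P then y else (0::complex))" for P y by simp
        show "(\<Sum>q\<le>n. aone p q * Xop (f x) p q (\<lambda>m. g m x) n) = (if p = 0 then g n x else 0)"
          by (cases "p = 0") (simp_all add: aone_def Xop_def e sum.delta)
      qed
      then show "act f aone g n x = g n x"
        unfolding act_eq actw_def by (simp add: suminf_single0)
    qed simp
  qed
  have P5: "\<forall>\<gamma> \<delta> g. in_Aconv \<gamma> \<and> in_Aconv \<delta> \<and> is_germ A y0 g \<longrightarrow>
          germ_eq y0 (act f (\<lambda>p q. \<gamma> p q + \<delta> p q) g) (\<lambda>n x. act f \<gamma> g n x + act f \<delta> g n x)"
  proof (intro allI impI)
    fix \<gamma> \<delta> g assume a: "in_Aconv \<gamma> \<and> in_Aconv \<delta> \<and> is_germ A y0 g"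
    obtain Cg Rg where g: "0 \<le> Cg" "1 \<le> Rg" "\<And>p q. norm (\<gamma> p q) \<le> Cg * Rg^(p+q) * fact q"
      using a Aconv_bound by blast
    obtain Cd Rd where d: "0 \<le> Cd" "1 \<le> Rd" "\<And>p q. norm (\<delta> p q) \<le> Cd * Rd^(p+q) * fact q"
      using a Aconv_bound by blast
    show "germ_eq y0 (act f (\<lambda>p q. \<gamma> p q + \<delta> p q) g) (\<lambda>n x. act f \<gamma> g n x + act f \<delta> g n x)"
    proof (rule germI[where e = "min (1 / (4 * Rg)) (1 / (4 * Rd))"])
      show "0 < min (1 / (4 * Rg)) (1 / (4 * Rd))" using g d by simp
      fix n x assume x: "norm (f x) < min (1 / (4 * Rg)) (1 / (4 * Rd))"
      have s1: "summable (\<lambda>p. \<Sum>q\<le>n. \<gamma> p q * Xop (f x) p q (\<lambda>m. g m x) n)"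
        by (rule actw_summ[OF g(3) g(1) g(2)]) (use x in simp)
      have s2: "summable (\<lambda>p. \<Sum>q\<le>n. \<delta> p q * Xop (f x) p q (\<lambda>m. g m x) n)"
        by (rule actw_summ[OF d(3) d(1) d(2)]) (use x in simp)
      show "act f (\<lambda>p q. \<gamma> p q + \<delta> p q) g n x = act f \<gamma> g n x + act f \<delta> g n x"
        unfolding act_eq actw_def using suminf_add[OF s1 s2]
        by (simp add: distrib_right sum.distrib)
    qed
  qed
  have P6: "\<forall>\<gamma> g h. in_Aconv \<gamma> \<and> is_germ A y0 g \<and> is_germ A y0 h \<longrightarrow>
          germ_eq y0 (act f \<gamma> (\<lambda>n x. g n x + h n x)) (\<lambda>n x. act f \<gamma> g n x + act f \<gamma> h n x)"
  proof (intro allI impI)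
    fix \<gamma> g h assume a: "in_Aconv \<gamma> \<and> is_germ A y0 g \<and> is_germ A y0 h"
    obtain Cg Rg where g: "0 \<le> Cg" "1 \<le> Rg" "\<And>p q. norm (\<gamma> p q) \<le> Cg * Rg^(p+q) * fact q"
      using a Aconv_bound by blast
    show "germ_eq y0 (act f \<gamma> (\<lambda>n x. g n x + h n x)) (\<lambda>n x. act f \<gamma> g n x + act f \<gamma> h n x)"
    proof (rule germI[where e = "1 / (4 * Rg)"])
      show "0 < 1 / (4 * Rg)" using g by simp
      fix n x assume x: "norm (f x) < 1 / (4 * Rg)"
      have s1: "summable (\<lambda>p. \<Sum>q\<le>n. \<gamma> p q * Xop (f x) p q (\<lambda>m. g m x) n)"
        by (rule actw_summ[OF g(3) g(1) g(2)]) (use x in simp)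
      have s2: "summable (\<lambda>p. \<Sum>q\<le>n. \<gamma> p q * Xop (f x) p q (\<lambda>m. h m x) n)"
        by (rule actw_summ[OF g(3) g(1) g(2)]) (use x in simp)
      show "act f \<gamma> (\<lambda>n x. g n x + h n x) n x = act f \<gamma> g n x + act f \<gamma> h n x"
        unfolding act_eq actw_def using suminf_add[OF s1 s2]
        by (simp add: Xop_add distrib_left sum.distrib)
    qed
  qed
  have P7: "\<forall>c \<gamma> g. in_Aconv \<gamma> \<and> is_germ A y0 g \<longrightarrow>
          germ_eq y0 (act f (\<lambda>p q. c * \<gamma> p q) g) (\<lambda>n x. c * act f \<gamma> g n x)
        \<and> germ_eq y0 (act f \<gamma> (\<lambda>n x. c * g n x)) (\<lambda>n x. c * act f \<gamma> g n x)"
  proof (intro allI impI conjI)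
    fix c \<gamma> g assume a: "in_Aconv \<gamma> \<and> is_germ A y0 g"
    obtain Cg Rg where g: "0 \<le> Cg" "1 \<le> Rg" "\<And>p q. norm (\<gamma> p q) \<le> Cg * Rg^(p+q) * fact q"
      using a Aconv_bound by blast
    have s1: "summable (\<lambda>p. \<Sum>q\<le>n. \<gamma> p q * Xop (f x) p q (\<lambda>m. g m x) n)" if "norm (f x) < 1 / (4 * Rg)" for n x
      by (rule actw_summ[OF g(3) g(1) g(2)]) (use that in simp)
    show "germ_eq y0 (act f (\<lambda>p q. c * \<gamma> p q) g) (\<lambda>n x. c * act f \<gamma> g n x)"
    proof (rule germI[where e = "1 / (4 * Rg)"])
      show "0 < 1 / (4 * Rg)" using g by simp
      fix n x assume x: "norm (f x) < 1 / (4 * Rg)"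
      show "act f (\<lambda>p q. c * \<gamma> p q) g n x = c * act f \<gamma> g n x"
        unfolding act_eq actw_def using suminf_mult[OF s1[OF x], of c]
        by (simp add: sum_distrib_left mult.assoc)
    qed
    show "germ_eq y0 (act f \<gamma> (\<lambda>n x. c * g n x)) (\<lambda>n x. c * act f \<gamma> g n x)"
    proof (rule germI[where e = "1 / (4 * Rg)"])
      show "0 < 1 / (4 * Rg)" using g by simp
      fix n x assume x: "norm (f x) < 1 / (4 * Rg)"
      show "act f \<gamma> (\<lambda>n x. c * g n x) n x = c * act f \<gamma> g n x"
        unfolding act_eq actw_def using suminf_mult[OF s1[OF x], of c]
        by (simp add: Xop_cmult sum_distrib_left algebra_simps)
    qed
  qed
  have P8: "\<forall>c g. in_B c \<and> is_germ A y0 g \<longrightarrow> germ_eq y0 (act f (Bemb c) g) (Bact c g)"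
  proof (intro allI impI)
    fix c and g :: "nat \<Rightarrow> 'a \<Rightarrow> complex"
    show "germ_eq y0 (act f (Bemb c) g) (Bact c g)"
    proof (rule germI[where e = 1])
      fix n x
      have "(\<lambda>p. \<Sum>q\<le>n. Bemb c p q * Xop (f x) p q (\<lambda>m. g m x) n) = (\<lambda>p. if p = 0 then Bact c g n x else 0)"
        by (auto simp: Bemb_def Bact_def Xop_def Bs_pow intro!: sum.cong)
      then show "act f (Bemb c) g n x = Bact c g n x"
        unfolding act_eq actw_def by (simp add: suminf_single0)
    qed simp
  qed
  have P9: "\<forall>g. is_germ A y0 g \<longrightarrow> germ_eq y0 (act f aelt g) (Aop f g)"
  proof (intro allI impI)
    fix g :: "nat \<Rightarrow> 'a \<Rightarrow> complex"
    show "germ_eq y0 (act f aelt g) (Aop f g)"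
    proof (rule germI[where e = 1])
      fix n x
      have "(\<lambda>p. \<Sum>q\<le>n. aelt p q * Xop (f x) p q (\<lambda>m. g m x) n) = (\<lambda>p. if p = 1 then Aop f g n x else 0)"
      proof
        fix p
        have e: "(if P then 1 else 0) * y = (if P then y else (0::complex))" for P y by simp
        show "(\<Sum>q\<le>n. aelt p q * Xop (f x) p q (\<lambda>m. g m x) n) = (if p = 1 then Aop f g n x else 0)"
          by (cases "p = 1") (simp_all add: aelt_def Xop_def e sum.delta Aw_def Aop_def)
      qed
      then show "act f aelt g n x = Aop f g n x"
        unfolding act_eq actw_def using sums_unique[OF sums_single[of 1 "\<lambda>_. Aop f g n x"]] by simp
    qed simp
  qed
  show ?thesis using P1 P2 P3 P4 P5 P6 P7 P8 P9 by blast
qed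

end
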